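(* Let $A,B,D,H$ be pairwise disjoint graphs, where $A$ is a path with an end-vertex $a$, $B$ is a path with an end-vertex $b$, $d\in V(D)$ is incident to at least one edge of $D$, and $x,y\in V(H)$ with $x\ne y$. Suppose $H$ has an automorphism $\eta$ with $\eta(x)=y$ and $\eta(y)=x$, and $v(A)\le v(B)$. Let $R$ be obtained from $A\cup B\cup H$ by identifying $x$ with $a$ and $y$ with $b$, and let $G_a$ (resp. $G_b$) be obtained from $R\cup D$ by identifying $d$ with $a$ (resp. with $b$). Then $c_s(G_a)\ge c_s(G_b)$ for every integer $s\ge 0$.
   Context: All graphs are finite, undirected, without loops; $v(\cdot)$ is the number of vertices. For a graph $G$ on $n$ vertices, with Laplacian matrix $L(G)=D(G)-A(G)$, write $\det(\lambda I-L(G))=\lambda\sum_{s=0}^{n-1}(-1)^s c_s(G)\lambda^{n-1-s}$; equivalently $c_s(G)=\sum_F\gamma(F)$ over spanning forests $F$ of $G$ with $s$ edges, where $\gamma(F)$ is the product of the numbers of vertices of the components of $F$; $c_s(G)=0$ for $s\ge n$. *)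

theory Defs
  imports Main
begin

type_synonym 'a graph = "'a set \<times> 'a set set"

definition verts :: "'a graph \<Rightarrow> 'a set" where "verts G = fst G"
definition edges :: "'a graph \<Rightarrow> 'a set set" where "edges G = snd G"

definition wf_graph :: "'a graph \<Rightarrow> bool" where
  "wf_graph G \<longleftrightarrow> finite (verts G) \<and>
     (\<forall>e\<in>edges G. \<exists>u v. u \<noteq> v \<and> e = {u, v} \<and> u \<in> verts G \<and> v \<in> verts G)"

definition is_path_with_end :: "'a graph \<Rightarrow> 'a \<Rightarrow> bool" where
  "is_path_with_end G a \<longleftrightarrow> (\<exists>vs. vs \<noteq> [] \<and> distinct vs \<and> hd vs = a \<and>
     verts G = set vs \<and> edges G = {{vs ! i, vs ! Suc i} | i. Suc i < length vs})"

definition graph_union :: "'a graph \<Rightarrow> 'a graph \<Rightarrow> 'a graph" where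
  "graph_union G H = (verts G \<union> verts H, edges G \<union> edges H)"

definition identify :: "'a graph \<Rightarrow> 'a \<Rightarrow> 'a \<Rightarrow> 'a graph" where
  "identify G u w = (let f = (\<lambda>z. if z = w then u else z) in
     (f ` verts G, (\<lambda>e. f ` e) ` edges G))"

definition is_automorphism :: "'a graph \<Rightarrow> ('a \<Rightarrow> 'a) \<Rightarrow> bool" where
  "is_automorphism G \<eta> \<longleftrightarrow> bij_betw \<eta> (verts G) (verts G) \<and>
     (\<forall>u\<in>verts G. \<forall>v\<in>verts G. {u, v} \<in> edges G \<longleftrightarrow> {\<eta> u, \<eta> v} \<in> edges G)"

definition conn :: "'a set set \<Rightarrow> ('a \<times> 'a) set" where
  "conn F = {(u, v). {u, v} \<in> F}\<^sup>*"

definition acyclic_edges :: "'a set set \<Rightarrow> bool" where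
  "acyclic_edges F \<longleftrightarrow> (\<forall>e\<in>F. \<forall>u v. e = {u, v} \<longrightarrow> (u, v) \<notin> conn (F - {e}))"

definition spanning_forests :: "'a graph \<Rightarrow> nat \<Rightarrow> 'a set set set" where
  "spanning_forests G s = {F. F \<subseteq> edges G \<and> card F = s \<and> acyclic_edges F}"

definition gamma :: "'a graph \<Rightarrow> 'a set set \<Rightarrow> nat" where
  "gamma G F = (\<Prod>C \<in> verts G // conn F. card C)"

definition lap_coeff :: "'a graph \<Rightarrow> nat \<Rightarrow> nat" where
  "lap_coeff G s = (\<Sum>F \<in> spanning_forests G s. gamma G F)"

end

theory Submission
  imports Defs "HOL-Computational_Algebra.Polynomial"
begin


lemma conn_sym: "(u, w) \<in> conn F \<Longrightarrow> (w, u) \<in> conn F"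
proof -
  assume "(u, w) \<in> conn F"
  hence "(w, u) \<in> ({(u, v). {u, v} \<in> F}\<inverse>)\<^sup>*" unfolding conn_def by (simp add: rtrancl_converse)
  moreover have "{(u, v). {u, v} \<in> F}\<inverse> = {(u, v). {u, v} \<in> F}" by (auto simp: insert_commute)
  ultimately show ?thesis unfolding conn_def by simp
qed

lemma conn_trans: "(u, w) \<in> conn F \<Longrightarrow> (w, z) \<in> conn F \<Longrightarrow> (u, z) \<in> conn F"
  unfolding conn_def by (rule rtrancl_trans)

lemma conn_refl [simp]: "(u, u) \<in> conn F"
  unfolding conn_def by simp

lemma conn_edge: "{u, w} \<in> F \<Longrightarrow> (u, w) \<in> conn F"
  unfolding conn_def by (rule r_into_rtrancl) simp

lemma conn_mono: "F \<subseteq> F' \<Longrightarrow> conn F \<subseteq> conn F'"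
  unfolding conn_def by (rule rtrancl_mono) blast

lemma conn_class_sub:
  assumes "\<forall>e\<in>F. e \<subseteq> V" "u \<in> V"
  shows "conn F `` {u} \<subseteq> V"
proof
  fix z assume "z \<in> conn F `` {u}"
  hence "(u, z) \<in> {(u, v). {u, v} \<in> F}\<^sup>*" unfolding conn_def by simp
  thus "z \<in> V"
    by (induction rule: rtrancl_induct) (use assms in auto)
qed

lemma conn_class_eq:
  assumes "(u, w) \<in> conn F" shows "conn F `` {u} = conn F `` {w}"
proof
  show "conn F `` {u} \<subseteq> conn F `` {w}"
  proof
    fix z assume "z \<in> conn F `` {u}"
    hence "(u, z) \<in> conn F" by simp
    hence "(w, z) \<in> conn F" using conn_trans[OF conn_sym[OF assms]] by blast
    thus "z \<in> conn F `` {w}" by simp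
  qed
  show "conn F `` {w} \<subseteq> conn F `` {u}"
  proof
    fix z assume "z \<in> conn F `` {w}"
    hence "(w, z) \<in> conn F" by simp
    hence "(u, z) \<in> conn F" using conn_trans[OF assms] by blast
    thus "z \<in> conn F `` {u}" by simp
  qed
qed

lemma glue_class:
  assumes F1: "\<forall>e\<in>F1. e \<subseteq> V1" and F2: "\<forall>e\<in>F2. e \<subseteq> V2"
    and I: "V1 \<inter> V2 = {v}" and u: "u \<in> V1"
  shows "conn (F1 \<union> F2) `` {u} =
    (if (u, v) \<in> conn F1 then conn F1 `` {v} \<union> conn F2 `` {v} else conn F1 `` {u})"
    (is "_ = ?S")
proof
  have vV1: "v \<in> V1" and vV2: "v \<in> V2" using I by auto
  have C1v: "conn F1 `` {v} \<subseteq> V1" using conn_class_sub[OF F1 vV1] .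
  have C2v: "conn F2 `` {v} \<subseteq> V2" using conn_class_sub[OF F2 vV2] .
  have C1u: "conn F1 `` {u} \<subseteq> V1" using conn_class_sub[OF F1 u] .
  show "conn (F1 \<union> F2) `` {u} \<subseteq> ?S"
  proof
    fix z assume "z \<in> conn (F1 \<union> F2) `` {u}"
    hence "(u, z) \<in> {(a, b). {a, b} \<in> F1 \<union> F2}\<^sup>*" unfolding conn_def by simp
    thus "z \<in> ?S"
    proof (induction rule: rtrancl_induct)
      case base
      show ?case
      proof (cases "(u, v) \<in> conn F1")
        case True
        hence "(v, u) \<in> conn F1" by (rule conn_sym)
        thus ?thesis using True by simp
      next
        case False
        thus ?thesis using conn_refl by simp
      qed
    next
      case (step y z)
      hence e: "{y, z} \<in> F1 \<or> {y, z} \<in> F2" by auto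
      show ?case
      proof (cases "(u, v) \<in> conn F1")
        case True
        hence yS: "y \<in> conn F1 `` {v} \<union> conn F2 `` {v}" using step.IH by simp
        show ?thesis
        proof (cases "y \<in> conn F1 `` {v}")
          case yin: True
          show ?thesis
          proof (cases "{y, z} \<in> F1")
            case True
            have "(v, z) \<in> conn F1" using conn_trans[OF _ conn_edge[OF True], of v] yin by simp
            then show ?thesis using \<open>(u, v) \<in> conn F1\<close> by simp
          next
            case False
            hence "{y, z} \<in> F2" using e by simp
            hence "y \<in> V2" "z \<in> V2" using F2 by auto
            moreover have "y \<in> V1" using yin C1v by auto
            ultimately have "y = v" using I by auto
            then show ?thesis using conn_edge[OF \<open>{y, z} \<in> F2\<close>] \<open>(u, v) \<in> conn F1\<close> by simp
          qed
        next
          case yout: False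
          hence yin: "y \<in> conn F2 `` {v}" using yS by simp
          show ?thesis
          proof (cases "{y, z} \<in> F2")
            case True
            have "(v, z) \<in> conn F2" using conn_trans[OF _ conn_edge[OF True], of v] yin by simp
            then show ?thesis using \<open>(u, v) \<in> conn F1\<close> by simp
          next
            case False
            hence "{y, z} \<in> F1" using e by simp
            hence "y \<in> V1" "z \<in> V1" using F1 by auto
            moreover have "y \<in> V2" using yin C2v by auto
            ultimately have "y = v" using I by auto
            then show ?thesis using conn_edge[OF \<open>{y, z} \<in> F1\<close>] \<open>(u, v) \<in> conn F1\<close> by simp
          qed
        qed
      next
        case False
        hence yin: "y \<in> conn F1 `` {u}" using step.IH by simp
        show ?thesis
        proof (cases "{y, z} \<in> F1")
          case True
          have "(u, z) \<in> conn F1" using conn_trans[OF _ conn_edge[OF True], of u] yin by simp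
          then show ?thesis using False by simp
        next
          case nF1: False
          hence "{y, z} \<in> F2" using e by simp
          hence "y \<in> V2" using F2 by auto
          moreover have "y \<in> V1" using yin C1u by auto
          ultimately have "y = v" using I by auto
          then show ?thesis using yin False by auto
        qed
      qed
    qed
  qed
  show "?S \<subseteq> conn (F1 \<union> F2) `` {u}"
  proof (cases "(u, v) \<in> conn F1")
    case True
    have m1: "conn F1 \<subseteq> conn (F1 \<union> F2)" and m2: "conn F2 \<subseteq> conn (F1 \<union> F2)"
      by (auto intro: conn_mono[THEN subsetD])
    have uv: "(u, v) \<in> conn (F1 \<union> F2)" using True m1 by auto
    have "conn F1 `` {v} \<union> conn F2 `` {v} \<subseteq> conn (F1 \<union> F2) `` {v}" using m1 m2 by auto
    also have "\<dots> = conn (F1 \<union> F2) `` {u}" using conn_class_eq[OF uv] by simp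
    finally show ?thesis using True by simp
  next
    case False
    have m1: "conn F1 \<subseteq> conn (F1 \<union> F2)"
      by (auto intro: conn_mono[THEN subsetD])
    then show ?thesis using False by auto
  qed
qed



lemma finite_quot: "finite A \<Longrightarrow> finite (A // r)"
  unfolding quotient_def by auto

lemma quot_mem: "C \<in> A // r \<longleftrightarrow> (\<exists>u\<in>A. C = r `` {u})"
  unfolding quotient_def by auto

lemma glue_class2:
  assumes F1: "\<forall>e\<in>F1. e \<subseteq> V1" and F2: "\<forall>e\<in>F2. e \<subseteq> V2"
    and I: "V1 \<inter> V2 = {v}" and u: "u \<in> V2"
  shows "conn (F1 \<union> F2) `` {u} =
    (if (u, v) \<in> conn F2 then conn F1 `` {v} \<union> conn F2 `` {v} else conn F2 `` {u})"
proof -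
  have "F1 \<union> F2 = F2 \<union> F1" by auto
  moreover have "V2 \<inter> V1 = {v}" using I by auto
  ultimately show ?thesis using glue_class[OF F2 F1 _ u] by auto
qed

lemma glue_quot:
  assumes F1: "\<forall>e\<in>F1. e \<subseteq> V1" and F2: "\<forall>e\<in>F2. e \<subseteq> V2"
    and I: "V1 \<inter> V2 = {v}"
  shows "(V1 \<union> V2) // conn (F1 \<union> F2) =
     (V1 // conn F1 - {conn F1 `` {v}}) \<union> (V2 // conn F2 - {conn F2 `` {v}})
       \<union> {conn F1 `` {v} \<union> conn F2 `` {v}}" (is "?L = ?P1 \<union> ?P2 \<union> {?M}")
proof
  have vV1: "v \<in> V1" and vV2: "v \<in> V2" using I by auto
  show "?L \<subseteq> ?P1 \<union> ?P2 \<union> {?M}"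
  proof
    fix C assume "C \<in> ?L"
    then obtain u where u: "u \<in> V1 \<union> V2" and C: "C = conn (F1 \<union> F2) `` {u}"
      unfolding quot_mem by blast
    show "C \<in> ?P1 \<union> ?P2 \<union> {?M}"
    proof (cases "u \<in> V1")
      case True
      note gc = glue_class[OF F1 F2 I True]
      show ?thesis
      proof (cases "(u, v) \<in> conn F1")
        case True
        then show ?thesis using C gc by simp
      next
        case False
        have "v \<in> conn F1 `` {v}" using conn_refl by simp
        moreover have "v \<notin> conn F1 `` {u}" using False by simp
        ultimately have "conn F1 `` {u} \<noteq> conn F1 `` {v}" by blast
        moreover have "conn F1 `` {u} \<in> V1 // conn F1" using \<open>u \<in> V1\<close> unfolding quot_mem by blast
        ultimately show ?thesis using C gc False by simp
      qed
    next
      case False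
      hence uV2: "u \<in> V2" using u by simp
      note gc = glue_class2[OF F1 F2 I uV2]
      show ?thesis
      proof (cases "(u, v) \<in> conn F2")
        case True
        then show ?thesis using C gc by simp
      next
        case False
        have "v \<in> conn F2 `` {v}" using conn_refl by simp
        moreover have "v \<notin> conn F2 `` {u}" using False by simp
        ultimately have "conn F2 `` {u} \<noteq> conn F2 `` {v}" by blast
        moreover have "conn F2 `` {u} \<in> V2 // conn F2" using uV2 unfolding quot_mem by blast
        ultimately show ?thesis using C gc False by simp
      qed
    qed
  qed
  show "?P1 \<union> ?P2 \<union> {?M} \<subseteq> ?L"
  proof
    fix C assume C: "C \<in> ?P1 \<union> ?P2 \<union> {?M}"
    show "C \<in> ?L"
    proof (cases "C \<in> ?P1")
      case True
      then obtain u where u: "u \<in> V1" and Cu: "C = conn F1 `` {u}" and ne: "C \<noteq> conn F1 `` {v}"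
        by (auto simp: quot_mem)
      have "(u, v) \<notin> conn F1" using conn_class_eq[of u v] Cu ne by auto
      hence "conn (F1 \<union> F2) `` {u} = C" using glue_class[OF F1 F2 I u] Cu by simp
      thus ?thesis using u unfolding quot_mem by blast
    next
      case nP1: False
      show ?thesis
      proof (cases "C \<in> ?P2")
        case True
        then obtain u where u: "u \<in> V2" and Cu: "C = conn F2 `` {u}" and ne: "C \<noteq> conn F2 `` {v}"
          by (auto simp: quot_mem)
        have "(u, v) \<notin> conn F2" using conn_class_eq[of u v] Cu ne by auto
        hence "conn (F1 \<union> F2) `` {u} = C" using glue_class2[OF F1 F2 I u] Cu by simp
        thus ?thesis using u unfolding quot_mem by blast
      next
        case False
        hence "C = ?M" using C nP1 by blast
        moreover have "conn (F1 \<union> F2) `` {v} = ?M" using glue_class[OF F1 F2 I vV1] by simp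
        ultimately show ?thesis using vV1 unfolding quot_mem by blast
      qed
    qed
  qed
qed

lemma glue_parts_disjoint:
  assumes F1: "\<forall>e\<in>F1. e \<subseteq> V1" and F2: "\<forall>e\<in>F2. e \<subseteq> V2"
    and I: "V1 \<inter> V2 = {v}"
  shows "(V1 // conn F1 - {conn F1 `` {v}}) \<inter> (V2 // conn F2 - {conn F2 `` {v}}) = {}"
    and "conn F1 `` {v} \<union> conn F2 `` {v} \<notin> (V1 // conn F1 - {conn F1 `` {v}})"
    and "conn F1 `` {v} \<union> conn F2 `` {v} \<notin> (V2 // conn F2 - {conn F2 `` {v}})"
    and "\<And>C. C \<in> V1 // conn F1 - {conn F1 `` {v}} \<Longrightarrow> C \<subseteq> V1 \<and> v \<notin> C \<and> finite C \<or> \<not> finite V1"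
    and "\<And>C. C \<in> V2 // conn F2 - {conn F2 `` {v}} \<Longrightarrow> C \<subseteq> V2 \<and> v \<notin> C \<and> finite C \<or> \<not> finite V2"
proof -
  have P1: "C \<subseteq> V1 \<and> v \<notin> C" if "C \<in> V1 // conn F1 - {conn F1 `` {v}}" for C
  proof -
    have ne: "C \<noteq> conn F1 `` {v}" using that by simp
    have "\<exists>u\<in>V1. C = conn F1 `` {u}" using that by (simp add: quot_mem)
    then obtain u where u: "u \<in> V1" and Cu: "C = conn F1 `` {u}" by blast
    have "(u, v) \<notin> conn F1" using conn_class_eq[of u v] Cu ne by auto
    thus ?thesis using conn_class_sub[OF F1 u] Cu by auto
  qed
  have P2: "C \<subseteq> V2 \<and> v \<notin> C" if "C \<in> V2 // conn F2 - {conn F2 `` {v}}" for C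
  proof -
    have ne: "C \<noteq> conn F2 `` {v}" using that by simp
    have "\<exists>u\<in>V2. C = conn F2 `` {u}" using that by (simp add: quot_mem)
    then obtain u where u: "u \<in> V2" and Cu: "C = conn F2 `` {u}" by blast
    have "(u, v) \<notin> conn F2" using conn_class_eq[of u v] Cu ne by auto
    thus ?thesis using conn_class_sub[OF F2 u] Cu by auto
  qed
  have ne1: "C \<noteq> {}" if "C \<in> V1 // conn F1" for C
  proof -
    have "\<exists>u\<in>V1. C = conn F1 `` {u}" using that by (simp add: quot_mem)
    then obtain u where "u \<in> V1" "C = conn F1 `` {u}" by blast
    moreover have "u \<in> conn F1 `` {u}" by simp
    ultimately show ?thesis by blast
  qed
  show "(V1 // conn F1 - {conn F1 `` {v}}) \<inter> (V2 // conn F2 - {conn F2 `` {v}}) = {}"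
  proof (rule ccontr)
    assume "\<not> ?thesis"
    then obtain C where C1: "C \<in> V1 // conn F1 - {conn F1 `` {v}}" and C2: "C \<in> V2 // conn F2 - {conn F2 `` {v}}" by blast
    obtain z where "z \<in> C" using ne1 C1 by blast
    hence "z \<in> V1" "z \<in> V2" "z \<noteq> v" using P1[OF C1] P2[OF C2] by auto
    thus False using I by auto
  qed
  have vM: "v \<in> conn F1 `` {v} \<union> conn F2 `` {v}" by simp
  show "conn F1 `` {v} \<union> conn F2 `` {v} \<notin> (V1 // conn F1 - {conn F1 `` {v}})"
    using P1 vM by blast
  show "conn F1 `` {v} \<union> conn F2 `` {v} \<notin> (V2 // conn F2 - {conn F2 `` {v}})"
    using P2 vM by blast
  show "\<And>C. C \<in> V1 // conn F1 - {conn F1 `` {v}} \<Longrightarrow> C \<subseteq> V1 \<and> v \<notin> C \<and> finite C \<or> \<not> finite V1"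
    using P1 finite_subset by metis
  show "\<And>C. C \<in> V2 // conn F2 - {conn F2 `` {v}} \<Longrightarrow> C \<subseteq> V2 \<and> v \<notin> C \<and> finite C \<or> \<not> finite V2"
    using P2 finite_subset by metis
qed

lemma glue_acyclic:
  assumes F1: "\<forall>e\<in>F1. e \<subseteq> V1" and F2: "\<forall>e\<in>F2. e \<subseteq> V2"
    and I: "V1 \<inter> V2 = {v}" and D: "F1 \<inter> F2 = {}"
  shows "acyclic_edges (F1 \<union> F2) \<longleftrightarrow> acyclic_edges F1 \<and> acyclic_edges F2"
proof
  assume ac: "acyclic_edges (F1 \<union> F2)"
  have "acyclic_edges F1"
    unfolding acyclic_edges_def
  proof (intro ballI allI impI)
    fix e u w assume e: "e \<in> F1" "e = {u, w}"
    have "conn (F1 - {e}) \<subseteq> conn (F1 \<union> F2 - {e})" by (rule conn_mono) auto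
    moreover have "(u, w) \<notin> conn (F1 \<union> F2 - {e})" using ac e unfolding acyclic_edges_def by blast
    ultimately show "(u, w) \<notin> conn (F1 - {e})" by blast
  qed
  moreover have "acyclic_edges F2"
    unfolding acyclic_edges_def
  proof (intro ballI allI impI)
    fix e u w assume e: "e \<in> F2" "e = {u, w}"
    have "conn (F2 - {e}) \<subseteq> conn (F1 \<union> F2 - {e})" by (rule conn_mono) auto
    moreover have "(u, w) \<notin> conn (F1 \<union> F2 - {e})" using ac e unfolding acyclic_edges_def by blast
    ultimately show "(u, w) \<notin> conn (F2 - {e})" by blast
  qed
  ultimately show "acyclic_edges F1 \<and> acyclic_edges F2" by simp
next
  assume "acyclic_edges F1 \<and> acyclic_edges F2"
  hence a1: "acyclic_edges F1" and a2: "acyclic_edges F2" by auto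
  have key: "(u, w) \<notin> conn ((G1 - {e}) \<union> G2)"
    if G1: "\<forall>e\<in>G1. e \<subseteq> W1" and G2: "\<forall>e\<in>G2. e \<subseteq> W2" and IW: "W1 \<inter> W2 = {v}"
      and ac: "acyclic_edges G1" and e: "e \<in> G1" "e = {u, w}"
    for G1 G2 :: "'a set set" and W1 W2 e u w
  proof
    assume uw: "(u, w) \<in> conn ((G1 - {e}) \<union> G2)"
    have G1': "\<forall>e'\<in>G1 - {e}. e' \<subseteq> W1" using G1 by auto
    have uW: "u \<in> W1" and wW: "w \<in> W1" using G1 e by auto
    have nuw: "(u, w) \<notin> conn (G1 - {e})" using ac e unfolding acyclic_edges_def by blast
    have vW2: "v \<in> W2" using IW by auto
    note gc = glue_class[OF G1' G2 IW uW]
    show False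
    proof (cases "(u, v) \<in> conn (G1 - {e})")
      case True
      hence "w \<in> conn (G1 - {e}) `` {v} \<union> conn G2 `` {v}" using gc uw by auto
      moreover have "w \<notin> conn (G1 - {e}) `` {v}"
      proof
        assume "w \<in> conn (G1 - {e}) `` {v}"
        hence "(v, w) \<in> conn (G1 - {e})" by simp
        from conn_trans[OF True this] nuw show False by simp
      qed
      ultimately have "w \<in> conn G2 `` {v}" by simp
      hence "w \<in> W2" using conn_class_sub[OF G2 vW2] by auto
      hence "w = v" using wW IW by auto
      thus False using True nuw by simp
    next
      case False
      thus False using gc uw nuw by auto
    qed
  qed
  show "acyclic_edges (F1 \<union> F2)"
    unfolding acyclic_edges_def
  proof (intro ballI allI impI)
    fix e u w assume e: "e \<in> F1 \<union> F2" "e = {u, w}"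
    show "(u, w) \<notin> conn (F1 \<union> F2 - {e})"
    proof (cases "e \<in> F1")
      case True
      hence "F1 \<union> F2 - {e} = (F1 - {e}) \<union> F2" using D by auto
      thus ?thesis using key[OF F1 F2 I a1 True e(2)] by simp
    next
      case False
      hence e2: "e \<in> F2" using e by simp
      hence "F1 \<union> F2 - {e} = (F2 - {e}) \<union> F1" using D by auto
      moreover have "V2 \<inter> V1 = {v}" using I by auto
      ultimately show ?thesis using key[OF F2 F1 _ a2 e2 e(2)] by simp
    qed
  qed
qed



definition wt :: "'a set \<Rightarrow> 'a set \<Rightarrow> int" where
  "wt X C = (if X \<inter> C = {} then int (card C) else if card (X \<inter> C) = 1 then 1 else 0)"

lemma wt_cong: "X \<inter> C = Y \<inter> C \<Longrightarrow> wt X C = wt Y C"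
  unfolding wt_def by simp

lemma wt_nonneg: "wt X C \<ge> 0"
  unfolding wt_def by simp

lemma wtv: "v \<in> C \<Longrightarrow> v \<notin> X \<Longrightarrow> finite C \<Longrightarrow> wt (insert v X) C = (if X \<inter> C = {} then 1 else 0)"
proof -
  assume a: "v \<in> C" "v \<notin> X" "finite C"
  have e: "insert v X \<inter> C = insert v (X \<inter> C)" using a by auto
  have fi: "finite (X \<inter> C)" using a by simp
  have "card (insert v (X \<inter> C)) = Suc (card (X \<inter> C))" using a fi by (simp add: card_insert_if)
  moreover have "X \<inter> C \<noteq> {} \<Longrightarrow> card (X \<inter> C) \<noteq> 0" using fi by simp
  ultimately show ?thesis unfolding wt_def e
    by (cases "X \<inter> C = {}") simp_all
qed

lemma wt_glue:
  assumes f: "finite C1" "finite C2" and I: "C1 \<inter> C2 = {v}" and vX: "v \<notin> X"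
  shows "wt X (C1 \<union> C2) = wt X C1 * wt (insert v X) C2 + wt (insert v X) C1 * wt X C2
            - wt (insert v X) C1 * wt (insert v X) C2"
proof -
  have v1: "v \<in> C1" and v2: "v \<in> C2" using I by auto
  note w1 = wtv[OF v1 vX f(1)] and w2 = wtv[OF v2 vX f(2)]
  have U: "X \<inter> (C1 \<union> C2) = (X \<inter> C1) \<union> (X \<inter> C2)" by auto
  have D: "(X \<inter> C1) \<inter> (X \<inter> C2) = {}" using I vX by auto
  have cU: "card (X \<inter> (C1 \<union> C2)) = card (X \<inter> C1) + card (X \<inter> C2)"
    unfolding U using D f by (simp add: card_Un_disjoint)
  have cC: "int (card (C1 \<union> C2)) = int (card C1) + int (card C2) - 1"
  proof -
    have "card (C1 \<union> C2) + card (C1 \<inter> C2) = card C1 + card C2" using card_Un_Int[OF f] by simp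
    thus ?thesis using I by simp
  qed
  show ?thesis
  proof (cases "X \<inter> C1 = {}")
    case T1: True
    show ?thesis
    proof (cases "X \<inter> C2 = {}")
      case True
      thus ?thesis using T1 w1 w2 cC U unfolding wt_def by simp
    next
      case False
      have "X \<inter> (C1 \<union> C2) = X \<inter> C2" using U T1 by simp
      hence "wt X (C1 \<union> C2) = wt X C2" unfolding wt_def using False by simp
      thus ?thesis using T1 False w1 w2 by simp
    qed
  next
    case F1: False
    show ?thesis
    proof (cases "X \<inter> C2 = {}")
      case True
      have "X \<inter> (C1 \<union> C2) = X \<inter> C1" using U True by simp
      hence "wt X (C1 \<union> C2) = wt X C1" unfolding wt_def using F1 by simp
      thus ?thesis using True F1 w1 w2 by simp
    next
      case False
      have "card (X \<inter> C1) \<noteq> 0" "card (X \<inter> C2) \<noteq> 0" using F1 False f by auto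
      hence "card (X \<inter> (C1 \<union> C2)) \<noteq> 1" "X \<inter> (C1 \<union> C2) \<noteq> {}" using cU F1 by auto
      hence "wt X (C1 \<union> C2) = 0" unfolding wt_def by simp
      thus ?thesis using F1 False w1 w2 by simp
    qed
  qed
qed

lemma wt_glue_in:
  assumes f: "finite C1" "finite C2" and I: "C1 \<inter> C2 = {v}" and vX: "v \<in> X"
  shows "wt X (C1 \<union> C2) = wt X C1 * wt X C2"
proof -
  have v1: "v \<in> C1" and v2: "v \<in> C2" using I by auto
  have U: "X \<inter> (C1 \<union> C2) = (X \<inter> C1) \<union> (X \<inter> C2)" by auto
  have D: "(X \<inter> C1) \<inter> (X \<inter> C2) = {v}" using I vX by auto
  have fi: "finite (X \<inter> C1)" "finite (X \<inter> C2)" using f by auto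
  have cU: "card (X \<inter> (C1 \<union> C2)) + 1 = card (X \<inter> C1) + card (X \<inter> C2)"
    unfolding U using card_Un_Int[OF fi] D by simp
  have n1: "X \<inter> C1 \<noteq> {}" "X \<inter> C2 \<noteq> {}" "X \<inter> (C1 \<union> C2) \<noteq> {}" using v1 v2 vX by auto
  have c1: "card (X \<inter> C1) \<ge> 1" "card (X \<inter> C2) \<ge> 1" using n1 fi
    by (simp_all add: Suc_leI card_gt_0_iff)
  have "card (X \<inter> (C1 \<union> C2)) = 1 \<longleftrightarrow> card (X \<inter> C1) = 1 \<and> card (X \<inter> C2) = 1"
    using cU c1 by linarith
  thus ?thesis unfolding wt_def using n1 by simp
qed

lemma prod_glue_common:
  assumes F1: "\<forall>e\<in>F1. e \<subseteq> V1" and F2: "\<forall>e\<in>F2. e \<subseteq> V2"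
    and I: "V1 \<inter> V2 = {v}" and fV: "finite V1" "finite V2"
  shows "(\<Prod>C\<in>(V1 \<union> V2) // conn (F1 \<union> F2). wt X C) =
           (\<Prod>C\<in>(V1 // conn F1 - {conn F1 `` {v}}). wt X C) * (\<Prod>C\<in>(V2 // conn F2 - {conn F2 `` {v}}). wt X C) * wt X (conn F1 `` {v} \<union> conn F2 `` {v})"
    and "\<And>Y. (\<And>C. C \<subseteq> V1 \<Longrightarrow> v \<notin> C \<Longrightarrow> Y \<inter> C = X \<inter> C) \<Longrightarrow>
           (\<Prod>C\<in>V1 // conn F1. wt Y C) = wt Y (conn F1 `` {v}) * (\<Prod>C\<in>(V1 // conn F1 - {conn F1 `` {v}}). wt X C)"
    and "\<And>Y. (\<And>C. C \<subseteq> V2 \<Longrightarrow> v \<notin> C \<Longrightarrow> Y \<inter> C = X \<inter> C) \<Longrightarrow>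
           (\<Prod>C\<in>V2 // conn F2. wt Y C) = wt Y (conn F2 `` {v}) * (\<Prod>C\<in>(V2 // conn F2 - {conn F2 `` {v}}). wt X C)"
proof -
  define P1 where "P1 = V1 // conn F1 - {conn F1 `` {v}}"
  define P2 where "P2 = V2 // conn F2 - {conn F2 `` {v}}"
  note dj = glue_parts_disjoint[OF F1 F2 I]
  have fP1: "finite P1" "finite P2" unfolding P1_def P2_def using finite_quot fV by auto
  have "(\<Prod>C\<in>(V1 \<union> V2) // conn (F1 \<union> F2). wt X C) =
        (\<Prod>C\<in>P1 \<union> P2 \<union> {conn F1 `` {v} \<union> conn F2 `` {v}}. wt X C)"
    unfolding glue_quot[OF F1 F2 I] P1_def P2_def ..
  also have "\<dots> = (\<Prod>C\<in>P1 \<union> P2. wt X C) * wt X (conn F1 `` {v} \<union> conn F2 `` {v})"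
    using fP1 dj(2,3) unfolding P1_def P2_def by (simp add: prod.union_disjoint)
  also have "(\<Prod>C\<in>P1 \<union> P2. wt X C) = (\<Prod>C\<in>P1. wt X C) * (\<Prod>C\<in>P2. wt X C)"
    using fP1 dj(1) unfolding P1_def P2_def by (simp add: prod.union_disjoint)
  finally have "(\<Prod>C\<in>(V1 \<union> V2) // conn (F1 \<union> F2). wt X C) =
           (\<Prod>C\<in>P1. wt X C) * (\<Prod>C\<in>P2. wt X C) * wt X (conn F1 `` {v} \<union> conn F2 `` {v})" .
  thus "(\<Prod>C\<in>(V1 \<union> V2) // conn (F1 \<union> F2). wt X C) =
           (\<Prod>C\<in>V1 // conn F1 - {conn F1 `` {v}}. wt X C) * (\<Prod>C\<in>V2 // conn F2 - {conn F2 `` {v}}. wt X C) * wt X (conn F1 `` {v} \<union> conn F2 `` {v})" unfolding P1_def P2_def .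
  have vV1: "v \<in> V1" and vV2: "v \<in> V2" using I by auto
  show "(\<Prod>C\<in>V1 // conn F1. wt Y C) = wt Y (conn F1 `` {v}) * (\<Prod>C\<in>V1 // conn F1 - {conn F1 `` {v}}. wt X C)"
    if Y: "\<And>C. C \<subseteq> V1 \<Longrightarrow> v \<notin> C \<Longrightarrow> Y \<inter> C = X \<inter> C" for Y
  proof -
    have mem: "conn F1 `` {v} \<in> V1 // conn F1" using vV1 unfolding quot_mem by blast
    have "(\<Prod>C\<in>V1 // conn F1. wt Y C) = wt Y (conn F1 `` {v}) * (\<Prod>C\<in>P1. wt Y C)"
      unfolding P1_def using prod.remove[OF finite_quot[OF fV(1)] mem] .
    also have "(\<Prod>C\<in>P1. wt Y C) = (\<Prod>C\<in>P1. wt X C)"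
    proof (rule prod.cong)
      fix C assume "C \<in> P1"
      hence "C \<subseteq> V1" "v \<notin> C" using dj(4) fV unfolding P1_def by auto
      thus "wt Y C = wt X C" using Y wt_cong by metis
    qed simp
    finally show ?thesis unfolding P1_def .
  qed
  show "(\<Prod>C\<in>V2 // conn F2. wt Y C) = wt Y (conn F2 `` {v}) * (\<Prod>C\<in>V2 // conn F2 - {conn F2 `` {v}}. wt X C)"
    if Y: "\<And>C. C \<subseteq> V2 \<Longrightarrow> v \<notin> C \<Longrightarrow> Y \<inter> C = X \<inter> C" for Y
  proof -
    have mem: "conn F2 `` {v} \<in> V2 // conn F2" using vV2 unfolding quot_mem by blast
    have "(\<Prod>C\<in>V2 // conn F2. wt Y C) = wt Y (conn F2 `` {v}) * (\<Prod>C\<in>P2. wt Y C)"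
      unfolding P2_def using prod.remove[OF finite_quot[OF fV(2)] mem] .
    also have "(\<Prod>C\<in>P2. wt Y C) = (\<Prod>C\<in>P2. wt X C)"
    proof (rule prod.cong)
      fix C assume "C \<in> P2"
      hence "C \<subseteq> V2" "v \<notin> C" using dj(5) fV unfolding P2_def by auto
      thus "wt Y C = wt X C" using Y wt_cong by metis
    qed simp
    finally show ?thesis unfolding P2_def .
  qed
qed

lemma prod_glue:
  assumes F1: "\<forall>e\<in>F1. e \<subseteq> V1" and F2: "\<forall>e\<in>F2. e \<subseteq> V2"
    and I: "V1 \<inter> V2 = {v}" and fV: "finite V1" "finite V2" and vX: "v \<notin> X"
  shows "(\<Prod>C\<in>(V1 \<union> V2) // conn (F1 \<union> F2). wt X C) =
     (\<Prod>C\<in>V1 // conn F1. wt (X \<inter> V1) C) * (\<Prod>C\<in>V2 // conn F2. wt (insert v (X \<inter> V2)) C)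
   + (\<Prod>C\<in>V1 // conn F1. wt (insert v (X \<inter> V1)) C) * (\<Prod>C\<in>V2 // conn F2. wt (X \<inter> V2) C)
   - (\<Prod>C\<in>V1 // conn F1. wt (insert v (X \<inter> V1)) C) * (\<Prod>C\<in>V2 // conn F2. wt (insert v (X \<inter> V2)) C)"
proof -
  note pc = prod_glue_common[OF F1 F2 I fV, where X=X]
  define a where "a = (\<Prod>C\<in>V1 // conn F1 - {conn F1 `` {v}}. wt X C)"
  define b where "b = (\<Prod>C\<in>V2 // conn F2 - {conn F2 `` {v}}. wt X C)"
  define C1 where "C1 = conn F1 `` {v}"
  define C2 where "C2 = conn F2 `` {v}"
  have vV1: "v \<in> V1" and vV2: "v \<in> V2" using I by auto
  have C1s: "C1 \<subseteq> V1" unfolding C1_def using conn_class_sub[OF F1 vV1] .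
  have C2s: "C2 \<subseteq> V2" unfolding C2_def using conn_class_sub[OF F2 vV2] .
  have CI: "C1 \<inter> C2 = {v}" using C1s C2s I unfolding C1_def C2_def by auto
  have fC: "finite C1" "finite C2" using C1s C2s fV finite_subset by auto
  have e1: "(\<Prod>C\<in>V1 // conn F1. wt (X \<inter> V1) C) = wt X C1 * a"
  proof -
    have "(\<Prod>C\<in>V1 // conn F1. wt (X \<inter> V1) C) = wt (X \<inter> V1) C1 * a"
      unfolding a_def C1_def by (rule pc(2)) auto
    moreover have "wt (X \<inter> V1) C1 = wt X C1" by (rule wt_cong) (use C1s in auto)
    ultimately show ?thesis by simp
  qed
  have e1': "(\<Prod>C\<in>V1 // conn F1. wt (insert v (X \<inter> V1)) C) = wt (insert v X) C1 * a"
  proof -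
    have "(\<Prod>C\<in>V1 // conn F1. wt (insert v (X \<inter> V1)) C) = wt (insert v (X \<inter> V1)) C1 * a"
      unfolding a_def C1_def by (rule pc(2)) auto
    moreover have "wt (insert v (X \<inter> V1)) C1 = wt (insert v X) C1" by (rule wt_cong) (use C1s in auto)
    ultimately show ?thesis by simp
  qed
  have e2: "(\<Prod>C\<in>V2 // conn F2. wt (X \<inter> V2) C) = wt X C2 * b"
  proof -
    have "(\<Prod>C\<in>V2 // conn F2. wt (X \<inter> V2) C) = wt (X \<inter> V2) C2 * b"
      unfolding b_def C2_def by (rule pc(3)) auto
    moreover have "wt (X \<inter> V2) C2 = wt X C2" by (rule wt_cong) (use C2s in auto)
    ultimately show ?thesis by simp
  qed
  have e2': "(\<Prod>C\<in>V2 // conn F2. wt (insert v (X \<inter> V2)) C) = wt (insert v X) C2 * b"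
  proof -
    have "(\<Prod>C\<in>V2 // conn F2. wt (insert v (X \<inter> V2)) C) = wt (insert v (X \<inter> V2)) C2 * b"
      unfolding b_def C2_def by (rule pc(3)) auto
    moreover have "wt (insert v (X \<inter> V2)) C2 = wt (insert v X) C2" by (rule wt_cong) (use C2s in auto)
    ultimately show ?thesis by simp
  qed
  have "(\<Prod>C\<in>(V1 \<union> V2) // conn (F1 \<union> F2). wt X C) = a * b * wt X (C1 \<union> C2)"
    using pc(1) unfolding a_def b_def C1_def C2_def .
  also have "\<dots> = a * b * (wt X C1 * wt (insert v X) C2 + wt (insert v X) C1 * wt X C2
            - wt (insert v X) C1 * wt (insert v X) C2)"
    using wt_glue[OF fC CI vX] by simp
  finally show ?thesis unfolding e1 e1' e2 e2' by (simp add: algebra_simps)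
qed

lemma prod_glue_in:
  assumes F1: "\<forall>e\<in>F1. e \<subseteq> V1" and F2: "\<forall>e\<in>F2. e \<subseteq> V2"
    and I: "V1 \<inter> V2 = {v}" and fV: "finite V1" "finite V2" and vX: "v \<in> X"
  shows "(\<Prod>C\<in>(V1 \<union> V2) // conn (F1 \<union> F2). wt X C) =
     (\<Prod>C\<in>V1 // conn F1. wt (X \<inter> V1) C) * (\<Prod>C\<in>V2 // conn F2. wt (X \<inter> V2) C)"
proof -
  note pc = prod_glue_common[OF F1 F2 I fV, where X=X]
  define a where "a = (\<Prod>C\<in>V1 // conn F1 - {conn F1 `` {v}}. wt X C)"
  define b where "b = (\<Prod>C\<in>V2 // conn F2 - {conn F2 `` {v}}. wt X C)"
  define C1 where "C1 = conn F1 `` {v}"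
  define C2 where "C2 = conn F2 `` {v}"
  have vV1: "v \<in> V1" and vV2: "v \<in> V2" using I by auto
  have C1s: "C1 \<subseteq> V1" unfolding C1_def using conn_class_sub[OF F1 vV1] .
  have C2s: "C2 \<subseteq> V2" unfolding C2_def using conn_class_sub[OF F2 vV2] .
  have CI: "C1 \<inter> C2 = {v}" using C1s C2s I unfolding C1_def C2_def by auto
  have fC: "finite C1" "finite C2" using C1s C2s fV finite_subset by auto
  have e1: "(\<Prod>C\<in>V1 // conn F1. wt (X \<inter> V1) C) = wt X C1 * a"
  proof -
    have "(\<Prod>C\<in>V1 // conn F1. wt (X \<inter> V1) C) = wt (X \<inter> V1) C1 * a"
      unfolding a_def C1_def by (rule pc(2)) auto
    moreover have "wt (X \<inter> V1) C1 = wt X C1" by (rule wt_cong) (use C1s in auto)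
    ultimately show ?thesis by simp
  qed
  have e2: "(\<Prod>C\<in>V2 // conn F2. wt (X \<inter> V2) C) = wt X C2 * b"
  proof -
    have "(\<Prod>C\<in>V2 // conn F2. wt (X \<inter> V2) C) = wt (X \<inter> V2) C2 * b"
      unfolding b_def C2_def by (rule pc(3)) auto
    moreover have "wt (X \<inter> V2) C2 = wt X C2" by (rule wt_cong) (use C2s in auto)
    ultimately show ?thesis by simp
  qed
  have "(\<Prod>C\<in>(V1 \<union> V2) // conn (F1 \<union> F2). wt X C) = a * b * wt X (C1 \<union> C2)"
    using pc(1) unfolding a_def b_def C1_def C2_def .
  also have "\<dots> = a * b * (wt X C1 * wt X C2)"
    using wt_glue_in[OF fC CI vX] by simp
  finally show ?thesis unfolding e1 e2 by (simp add: algebra_simps)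
qed



definition Q :: "'a graph \<Rightarrow> 'a set \<Rightarrow> nat \<Rightarrow> int" where
  "Q G X s = (\<Sum>F\<in>spanning_forests G s. \<Prod>C\<in>verts G // conn F. wt X C)"

lemma wf_fin: "wf_graph G \<Longrightarrow> finite (verts G)"
  unfolding wf_graph_def by simp

lemma wf_edge: "wf_graph G \<Longrightarrow> e \<in> edges G \<Longrightarrow> \<exists>u w. u \<noteq> w \<and> e = {u, w} \<and> u \<in> verts G \<and> w \<in> verts G"
  unfolding wf_graph_def by (elim conjE) (drule (1) bspec)

lemma wf_sub: "wf_graph G \<Longrightarrow> \<forall>e\<in>edges G. e \<subseteq> verts G"
proof
  fix e assume "wf_graph G" "e \<in> edges G"
  then obtain u w where "e = {u, w}" "u \<in> verts G" "w \<in> verts G" using wf_edge by metis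
  thus "e \<subseteq> verts G" by simp
qed

lemma wf_two: "wf_graph G \<Longrightarrow> e \<in> edges G \<Longrightarrow> \<exists>u w. u \<noteq> w \<and> e = {u, w}"
  using wf_edge by metis

lemma wf_finE: "wf_graph G \<Longrightarrow> finite (edges G)"
proof -
  assume w: "wf_graph G"
  have "edges G \<subseteq> Pow (verts G)" using wf_sub[OF w] by auto
  thus ?thesis using wf_fin[OF w] finite_subset by blast
qed

lemma SF_finite: "wf_graph G \<Longrightarrow> finite (spanning_forests G s)"
proof -
  assume w: "wf_graph G"
  have "spanning_forests G s \<subseteq> Pow (edges G)" unfolding spanning_forests_def by auto
  thus ?thesis using wf_finE[OF w] finite_subset by blast
qed

lemma Q_nonneg: "Q G X s \<ge> 0"
  unfolding Q_def by (intro sum_nonneg prod_nonneg) (simp add: wt_nonneg)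

lemma SF_big: "wf_graph G \<Longrightarrow> card (edges G) < s \<Longrightarrow> spanning_forests G s = {}"
proof -
  assume w: "wf_graph G" and c: "card (edges G) < s"
  { fix F assume "F \<in> spanning_forests G s"
    hence "F \<subseteq> edges G" "card F = s" unfolding spanning_forests_def by auto
    hence "s \<le> card (edges G)" using card_mono[OF wf_finE[OF w]] by auto
    hence False using c by simp }
  thus ?thesis by blast
qed

lemma Q_big: "wf_graph G \<Longrightarrow> card (edges G) < s \<Longrightarrow> Q G X s = 0"
  unfolding Q_def using SF_big[of G s] by simp

lemma edges_disj:
  assumes w1: "wf_graph G1" and w2: "wf_graph G2" and I: "verts G1 \<inter> verts G2 = {v}"
  shows "edges G1 \<inter> edges G2 = {}"
proof (rule ccontr)
  assume "\<not> ?thesis"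
  then obtain e where e: "e \<in> edges G1" "e \<in> edges G2" by blast
  then obtain p q where pq: "p \<noteq> q" "e = {p, q}" using wf_two[OF w1] by blast
  have "e \<subseteq> verts G1" "e \<subseteq> verts G2" using e wf_sub[OF w1] wf_sub[OF w2] by auto
  hence "e \<subseteq> {v}" using I by auto
  thus False using pq by auto
qed

lemma verts_union [simp]: "verts (graph_union G1 G2) = verts G1 \<union> verts G2"
  unfolding graph_union_def verts_def by simp

lemma edges_union [simp]: "edges (graph_union G1 G2) = edges G1 \<union> edges G2"
  unfolding graph_union_def edges_def by simp

lemma SF_bij:
  assumes w1: "wf_graph G1" and w2: "wf_graph G2" and I: "verts G1 \<inter> verts G2 = {v}"
  shows "bij_betw (\<lambda>(i, F1, F2). F1 \<union> F2)
           (SIGMA i:{..s}. spanning_forests G1 i \<times> spanning_forests G2 (s - i))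
           (spanning_forests (graph_union G1 G2) s)"
proof -
  have D: "edges G1 \<inter> edges G2 = {}" using edges_disj[OF w1 w2 I] .
  have fE: "finite (edges G1)" "finite (edges G2)" using wf_finE[OF w1] wf_finE[OF w2] by auto
  have sub1: "\<forall>e\<in>F. e \<subseteq> verts G1" if "F \<subseteq> edges G1" for F using that wf_sub[OF w1] by blast
  have sub2: "\<forall>e\<in>F. e \<subseteq> verts G2" if "F \<subseteq> edges G2" for F using that wf_sub[OF w2] by blast
  show ?thesis
    unfolding bij_betw_def
  proof
    show "inj_on (\<lambda>(i, F1, F2). F1 \<union> F2)
           (SIGMA i:{..s}. spanning_forests G1 i \<times> spanning_forests G2 (s - i))"
    proof (rule inj_onI)
      fix p q
      assume pS: "p \<in> (SIGMA i:{..s}. spanning_forests G1 i \<times> spanning_forests G2 (s - i))"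
        and qS: "q \<in> (SIGMA i:{..s}. spanning_forests G1 i \<times> spanning_forests G2 (s - i))"
        and pq: "(\<lambda>(i, F1, F2). F1 \<union> F2) p = (\<lambda>(i, F1, F2). F1 \<union> F2) q"
      obtain i F1 F2 where p: "p = (i, F1, F2)" by (cases p) auto
      obtain j F1' F2' where q: "q = (j, F1', F2')" by (cases q) auto
      have a: "F1 \<in> spanning_forests G1 i" "F2 \<in> spanning_forests G2 (s - i)"
        "F1' \<in> spanning_forests G1 j" "F2' \<in> spanning_forests G2 (s - j)"
        using pS qS p q by auto
      have eq: "F1 \<union> F2 = F1' \<union> F2'" using pq p q by simp
      have s: "F1 \<subseteq> edges G1" "F2 \<subseteq> edges G2" "F1' \<subseteq> edges G1" "F2' \<subseteq> edges G2"
        using a unfolding spanning_forests_def by auto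
      have "F1 = (F1 \<union> F2) \<inter> edges G1" using s D by auto
      moreover have "F1' = (F1' \<union> F2') \<inter> edges G1" using s D by auto
      ultimately have e1: "F1 = F1'" using eq by simp
      have "F2 = (F1 \<union> F2) \<inter> edges G2" using s D by auto
      moreover have "F2' = (F1' \<union> F2') \<inter> edges G2" using s D by auto
      ultimately have e2: "F2 = F2'" using eq by simp
      have "i = card F1" "j = card F1'" using a unfolding spanning_forests_def by auto
      thus "p = q" using e1 e2 p q by simp
    qed
    show "(\<lambda>(i, F1, F2). F1 \<union> F2) `
           (SIGMA i:{..s}. spanning_forests G1 i \<times> spanning_forests G2 (s - i)) =
          spanning_forests (graph_union G1 G2) s"
    proof
      show "(\<lambda>(i, F1, F2). F1 \<union> F2) `
           (SIGMA i:{..s}. spanning_forests G1 i \<times> spanning_forests G2 (s - i)) \<subseteq>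
          spanning_forests (graph_union G1 G2) s"
      proof
        fix F assume "F \<in> (\<lambda>(i, F1, F2). F1 \<union> F2) `
           (SIGMA i:{..s}. spanning_forests G1 i \<times> spanning_forests G2 (s - i))"
        then obtain p where pS: "p \<in> (SIGMA i:{..s}. spanning_forests G1 i \<times> spanning_forests G2 (s - i))"
          and Fp: "F = (\<lambda>(i, F1, F2). F1 \<union> F2) p" by blast
        obtain i F1 F2 where p: "p = (i, F1, F2)" by (cases p) auto
        have i: "i \<in> {..s}" and a: "F1 \<in> spanning_forests G1 i" "F2 \<in> spanning_forests G2 (s - i)"
          using pS p by auto
        have FF: "F = F1 \<union> F2" using Fp p by simp
        have s: "F1 \<subseteq> edges G1" "F2 \<subseteq> edges G2" and c: "card F1 = i" "card F2 = s - i"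
          and ac: "acyclic_edges F1" "acyclic_edges F2"
          using a unfolding spanning_forests_def by auto
        have fF: "finite F1" "finite F2" using s fE finite_subset by auto
        have dF: "F1 \<inter> F2 = {}" using s D by auto
        have "card (F1 \<union> F2) = s" using card_Un_disjoint[OF fF dF] c i by simp
        moreover have "acyclic_edges (F1 \<union> F2)"
          using glue_acyclic[OF sub1[OF s(1)] sub2[OF s(2)] I dF] ac by simp
        ultimately show "F \<in> spanning_forests (graph_union G1 G2) s"
          using s FF unfolding spanning_forests_def by auto
      qed
      show "spanning_forests (graph_union G1 G2) s \<subseteq> (\<lambda>(i, F1, F2). F1 \<union> F2) `
           (SIGMA i:{..s}. spanning_forests G1 i \<times> spanning_forests G2 (s - i))"
      proof
        fix F assume F: "F \<in> spanning_forests (graph_union G1 G2) s"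
        hence Fs: "F \<subseteq> edges G1 \<union> edges G2" and cF: "card F = s" and acF: "acyclic_edges F"
          unfolding spanning_forests_def by auto
        define F1 where "F1 = F \<inter> edges G1"
        define F2 where "F2 = F \<inter> edges G2"
        have FU: "F = F1 \<union> F2" using Fs unfolding F1_def F2_def by auto
        have s: "F1 \<subseteq> edges G1" "F2 \<subseteq> edges G2" unfolding F1_def F2_def by auto
        have fF: "finite F1" "finite F2" using s fE finite_subset by auto
        have dF: "F1 \<inter> F2 = {}" using s D by auto
        have cc: "card F1 + card F2 = s" using card_Un_disjoint[OF fF dF] cF FU by simp
        have ac: "acyclic_edges F1" "acyclic_edges F2"
          using glue_acyclic[OF sub1[OF s(1)] sub2[OF s(2)] I dF] acF FU by auto
        have "(card F1, F1, F2) \<in> (SIGMA i:{..s}. spanning_forests G1 i \<times> spanning_forests G2 (s - i))"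
          using s ac cc unfolding spanning_forests_def by auto
        thus "F \<in> (\<lambda>(i, F1, F2). F1 \<union> F2) `
           (SIGMA i:{..s}. spanning_forests G1 i \<times> spanning_forests G2 (s - i))"
          by (rule rev_image_eqI) (simp add: FU)
      qed
    qed
  qed
qed

lemma sum_pairs:
  "finite A \<Longrightarrow> finite B \<Longrightarrow> (\<Sum>(x, y)\<in>A \<times> B. f x * g y) = sum f A * (sum g B :: int)"
  by (simp add: sum_product sum.cartesian_product)

lemma Q_split:
  assumes w1: "wf_graph G1" and w2: "wf_graph G2" and I: "verts G1 \<inter> verts G2 = {v}"
  shows "Q (graph_union G1 G2) X s =
    (\<Sum>i\<le>s. \<Sum>(F1, F2)\<in>spanning_forests G1 i \<times> spanning_forests G2 (s - i).
        \<Prod>C\<in>(verts G1 \<union> verts G2) // conn (F1 \<union> F2). wt X C)"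
proof -
  let ?g = "\<lambda>F. \<Prod>C\<in>(verts G1 \<union> verts G2) // conn F. wt X C"
  have "Q (graph_union G1 G2) X s = (\<Sum>F\<in>spanning_forests (graph_union G1 G2) s. ?g F)"
    unfolding Q_def by simp
  also have "\<dots> = (\<Sum>x\<in>(SIGMA i:{..s}. spanning_forests G1 i \<times> spanning_forests G2 (s - i)).
                     ?g ((\<lambda>(i, F1, F2). F1 \<union> F2) x))"
    using sum.reindex_bij_betw[OF SF_bij[OF w1 w2 I], of ?g] by simp
  also have "\<dots> = (\<Sum>i\<le>s. \<Sum>p\<in>spanning_forests G1 i \<times> spanning_forests G2 (s - i).
                      ?g (fst p \<union> snd p))"
    by (subst sum.Sigma) (auto simp: SF_finite[OF w1] SF_finite[OF w2] split_def)
  finally show ?thesis by (simp add: split_def)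
qed

lemma Q_glue:
  assumes w1: "wf_graph G1" and w2: "wf_graph G2" and I: "verts G1 \<inter> verts G2 = {v}"
    and vX: "v \<notin> X"
  shows "Q (graph_union G1 G2) X s =
    (\<Sum>i\<le>s. Q G1 (X \<inter> verts G1) i * Q G2 (insert v (X \<inter> verts G2)) (s - i)
          + Q G1 (insert v (X \<inter> verts G1)) i * Q G2 (X \<inter> verts G2) (s - i)
          - Q G1 (insert v (X \<inter> verts G1)) i * Q G2 (insert v (X \<inter> verts G2)) (s - i))"
proof -
  let ?V1 = "verts G1" and ?V2 = "verts G2"
  let ?a = "\<lambda>F1. \<Prod>C\<in>?V1 // conn F1. wt (X \<inter> ?V1) C"
  let ?a' = "\<lambda>F1. \<Prod>C\<in>?V1 // conn F1. wt (insert v (X \<inter> ?V1)) C"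
  let ?b = "\<lambda>F2. \<Prod>C\<in>?V2 // conn F2. wt (X \<inter> ?V2) C"
  let ?b' = "\<lambda>F2. \<Prod>C\<in>?V2 // conn F2. wt (insert v (X \<inter> ?V2)) C"
  have inner: "(\<Sum>(F1, F2)\<in>spanning_forests G1 i \<times> spanning_forests G2 (s - i).
        \<Prod>C\<in>(?V1 \<union> ?V2) // conn (F1 \<union> F2). wt X C)
      = Q G1 (X \<inter> ?V1) i * Q G2 (insert v (X \<inter> ?V2)) (s - i)
          + Q G1 (insert v (X \<inter> ?V1)) i * Q G2 (X \<inter> ?V2) (s - i)
          - Q G1 (insert v (X \<inter> ?V1)) i * Q G2 (insert v (X \<inter> ?V2)) (s - i)" for i
  proof -
    let ?A = "spanning_forests G1 i" and ?B = "spanning_forests G2 (s - i)"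
    have fA: "finite ?A" "finite ?B" using SF_finite[OF w1] SF_finite[OF w2] by auto
    have "(\<Sum>(F1, F2)\<in>?A \<times> ?B. \<Prod>C\<in>(?V1 \<union> ?V2) // conn (F1 \<union> F2). wt X C)
        = (\<Sum>(F1, F2)\<in>?A \<times> ?B. ?a F1 * ?b' F2 + ?a' F1 * ?b F2 - ?a' F1 * ?b' F2)"
    proof (rule sum.cong, simp, clarify)
      fix F1 F2 assume "F1 \<in> ?A" "F2 \<in> ?B"
      hence s: "F1 \<subseteq> edges G1" "F2 \<subseteq> edges G2" unfolding spanning_forests_def by auto
      show "(\<Prod>C\<in>(?V1 \<union> ?V2) // conn (F1 \<union> F2). wt X C) = ?a F1 * ?b' F2 + ?a' F1 * ?b F2 - ?a' F1 * ?b' F2"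
      proof -
        have e1: "\<forall>e\<in>F1. e \<subseteq> ?V1" using s(1) wf_sub[OF w1] by auto
        have e2: "\<forall>e\<in>F2. e \<subseteq> ?V2" using s(2) wf_sub[OF w2] by auto
        show ?thesis using prod_glue[OF e1 e2 I wf_fin[OF w1] wf_fin[OF w2] vX] .
      qed
    qed
    also have "\<dots> = (\<Sum>(F1, F2)\<in>?A \<times> ?B. ?a F1 * ?b' F2) + (\<Sum>(F1, F2)\<in>?A \<times> ?B. ?a' F1 * ?b F2)
                   - (\<Sum>(F1, F2)\<in>?A \<times> ?B. ?a' F1 * ?b' F2)"
      by (simp add: split_def sum_subtractf sum.distrib)
    also have "\<dots> = sum ?a ?A * sum ?b' ?B + sum ?a' ?A * sum ?b ?B - sum ?a' ?A * sum ?b' ?B"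
      using fA by (simp add: sum_pairs)
    finally show ?thesis unfolding Q_def by simp
  qed
  show ?thesis unfolding Q_split[OF w1 w2 I] using inner by simp
qed

lemma Q_glue_in:
  assumes w1: "wf_graph G1" and w2: "wf_graph G2" and I: "verts G1 \<inter> verts G2 = {v}"
    and vX: "v \<in> X"
  shows "Q (graph_union G1 G2) X s =
    (\<Sum>i\<le>s. Q G1 (X \<inter> verts G1) i * Q G2 (X \<inter> verts G2) (s - i))"
proof -
  let ?V1 = "verts G1" and ?V2 = "verts G2"
  let ?a = "\<lambda>F1. \<Prod>C\<in>?V1 // conn F1. wt (X \<inter> ?V1) C"
  let ?b = "\<lambda>F2. \<Prod>C\<in>?V2 // conn F2. wt (X \<inter> ?V2) C"
  have inner: "(\<Sum>(F1, F2)\<in>spanning_forests G1 i \<times> spanning_forests G2 (s - i).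
        \<Prod>C\<in>(?V1 \<union> ?V2) // conn (F1 \<union> F2). wt X C)
      = Q G1 (X \<inter> ?V1) i * Q G2 (X \<inter> ?V2) (s - i)" for i
  proof -
    let ?A = "spanning_forests G1 i" and ?B = "spanning_forests G2 (s - i)"
    have fA: "finite ?A" "finite ?B" using SF_finite[OF w1] SF_finite[OF w2] by auto
    have "(\<Sum>(F1, F2)\<in>?A \<times> ?B. \<Prod>C\<in>(?V1 \<union> ?V2) // conn (F1 \<union> F2). wt X C)
        = (\<Sum>(F1, F2)\<in>?A \<times> ?B. ?a F1 * ?b F2)"
    proof (rule sum.cong, simp, clarify)
      fix F1 F2 assume "F1 \<in> ?A" "F2 \<in> ?B"
      hence s: "F1 \<subseteq> edges G1" "F2 \<subseteq> edges G2" unfolding spanning_forests_def by auto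
      show "(\<Prod>C\<in>(?V1 \<union> ?V2) // conn (F1 \<union> F2). wt X C) = ?a F1 * ?b F2"
      proof -
        have e1: "\<forall>e\<in>F1. e \<subseteq> ?V1" using s(1) wf_sub[OF w1] by auto
        have e2: "\<forall>e\<in>F2. e \<subseteq> ?V2" using s(2) wf_sub[OF w2] by auto
        show ?thesis using prod_glue_in[OF e1 e2 I wf_fin[OF w1] wf_fin[OF w2] vX] .
      qed
    qed
    also have "\<dots> = sum ?a ?A * sum ?b ?B"
      using fA by (simp add: sum_pairs)
    finally show ?thesis unfolding Q_def by simp
  qed
  show ?thesis unfolding Q_split[OF w1 w2 I] using inner by simp
qed



definition qpoly :: "'a graph \<Rightarrow> 'a set \<Rightarrow> int poly" where
  "qpoly G X = Poly (map (Q G X) [0..<Suc (card (edges G))])"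

lemma coeff_qpoly: "wf_graph G \<Longrightarrow> coeff (qpoly G X) s = Q G X s"
proof -
  assume w: "wf_graph G"
  show ?thesis
  proof (cases "s < Suc (card (edges G))")
    case True
    thus ?thesis unfolding qpoly_def by (simp add: nth_default_nth del: upt_Suc)
  next
    case False
    thus ?thesis unfolding qpoly_def using Q_big[OF w, of s X] by (simp add: nth_default_beyond)
  qed
qed

lemma wf_union:
  assumes w1: "wf_graph G1" and w2: "wf_graph G2" shows "wf_graph (graph_union G1 G2)"
  unfolding wf_graph_def
proof (intro conjI ballI)
  show "finite (verts (graph_union G1 G2))" using wf_fin[OF w1] wf_fin[OF w2] by simp
  fix e assume "e \<in> edges (graph_union G1 G2)"
  hence "e \<in> edges G1 \<or> e \<in> edges G2" by simp
  then obtain u w where uw: "u \<noteq> w" "e = {u, w}" "u \<in> verts G1 \<union> verts G2" "w \<in> verts G1 \<union> verts G2"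
  proof
    assume "e \<in> edges G1"
    then obtain u w where "u \<noteq> w" "e = {u, w}" "u \<in> verts G1" "w \<in> verts G1" using wf_edge[OF w1] by metis
    thus ?thesis using that by simp
  next
    assume "e \<in> edges G2"
    then obtain u w where "u \<noteq> w" "e = {u, w}" "u \<in> verts G2" "w \<in> verts G2" using wf_edge[OF w2] by metis
    thus ?thesis using that by simp
  qed
  show "\<exists>u v. u \<noteq> v \<and> e = {u, v} \<and> u \<in> verts (graph_union G1 G2) \<and> v \<in> verts (graph_union G1 G2)"
    using uw by (intro exI[of _ u] exI[of _ w]) simp
qed

lemma qpoly_glue:
  assumes w1: "wf_graph G1" and w2: "wf_graph G2" and I: "verts G1 \<inter> verts G2 = {v}"
    and vX: "v \<notin> X"
  shows "qpoly (graph_union G1 G2) X =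
    qpoly G1 (X \<inter> verts G1) * qpoly G2 (insert v (X \<inter> verts G2))
    + qpoly G1 (insert v (X \<inter> verts G1)) * qpoly G2 (X \<inter> verts G2)
    - qpoly G1 (insert v (X \<inter> verts G1)) * qpoly G2 (insert v (X \<inter> verts G2))"
proof (rule poly_eqI)
  fix s
  show "coeff (qpoly (graph_union G1 G2) X) s = coeff (qpoly G1 (X \<inter> verts G1) * qpoly G2 (insert v (X \<inter> verts G2))
    + qpoly G1 (insert v (X \<inter> verts G1)) * qpoly G2 (X \<inter> verts G2)
    - qpoly G1 (insert v (X \<inter> verts G1)) * qpoly G2 (insert v (X \<inter> verts G2))) s"
    unfolding coeff_diff coeff_add coeff_mult coeff_qpoly[OF w1] coeff_qpoly[OF w2]
      coeff_qpoly[OF wf_union[OF w1 w2]] Q_glue[OF w1 w2 I vX]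
    by (simp add: sum_subtractf sum.distrib)
qed

lemma qpoly_glue_in:
  assumes w1: "wf_graph G1" and w2: "wf_graph G2" and I: "verts G1 \<inter> verts G2 = {v}"
    and vX: "v \<in> X"
  shows "qpoly (graph_union G1 G2) X = qpoly G1 (X \<inter> verts G1) * qpoly G2 (X \<inter> verts G2)"
proof (rule poly_eqI)
  fix s
  show "coeff (qpoly (graph_union G1 G2) X) s = coeff (qpoly G1 (X \<inter> verts G1) * qpoly G2 (X \<inter> verts G2)) s"
    unfolding coeff_mult coeff_qpoly[OF w1] coeff_qpoly[OF w2]
      coeff_qpoly[OF wf_union[OF w1 w2]] Q_glue_in[OF w1 w2 I vX] ..
qed

lemma conn_empty [simp]: "conn {} = Id"
  unfolding conn_def by simp

lemma acyclic_empty [simp]: "acyclic_edges {}"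
  unfolding acyclic_edges_def by simp

lemma verts_pair [simp]: "verts (V, E) = V" unfolding verts_def by simp
lemma edges_pair [simp]: "edges (V, E) = E" unfolding edges_def by simp

lemma SF_0: "wf_graph G \<Longrightarrow> spanning_forests G 0 = {{}}"
proof -
  assume w: "wf_graph G"
  have "F \<in> spanning_forests G 0 \<longleftrightarrow> F = {}" for F
  proof
    assume "F \<in> spanning_forests G 0"
    hence "F \<subseteq> edges G" "card F = 0" unfolding spanning_forests_def by auto
    moreover have "finite F" using \<open>F \<subseteq> edges G\<close> wf_finE[OF w] finite_subset by blast
    ultimately show "F = {}" by simp
  qed (simp add: spanning_forests_def)
  thus ?thesis by blast
qed

lemma wt_single [simp]: "wt X {u} = 1"
  unfolding wt_def by (cases "u \<in> X") auto

lemma quot_single: "{u} // r = {r `` {u}}"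
  unfolding quotient_def by simp

lemma quot_pair: "{p, q} // r = {r `` {p}, r `` {q}}"
  unfolding quotient_def by (simp add: insert_commute)

lemma wf_single: "wf_graph ({u}, {})"
  unfolding wf_graph_def by simp

lemma qpoly_single: "qpoly ({u}, {}) X = 1"
proof (rule poly_eqI)
  fix s
  show "coeff (qpoly ({u}, {}) X) s = coeff 1 s"
  proof (cases s)
    case 0
    have "Q ({u}, {}) X 0 = 1"
      unfolding Q_def SF_0[OF wf_single] by (simp add: quot_single)
    thus ?thesis using 0 by (simp add: coeff_qpoly[OF wf_single])
  next
    case (Suc n)
    thus ?thesis by (simp add: coeff_qpoly[OF wf_single] Q_big[OF wf_single])
  qed
qed

lemma wf_K2: "p \<noteq> q \<Longrightarrow> wf_graph ({p, q}, {{p, q}})"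
  unfolding wf_graph_def by (simp, intro exI[of _ p] exI[of _ q]) simp

lemma conn_K2:
  assumes "z \<in> {p, q}" shows "conn {{p, q}} `` {z} = {p, q}"
proof
  show "conn {{p, q}} `` {z} \<subseteq> {p, q}"
    by (rule conn_class_sub) (use assms in simp_all)
  have "(p, q) \<in> conn {{p, q}}" by (rule conn_edge) simp
  hence "(q, p) \<in> conn {{p, q}}" by (rule conn_sym)
  show "{p, q} \<subseteq> conn {{p, q}} `` {z}"
  proof (cases "z = p")
    case True
    thus ?thesis using \<open>(p, q) \<in> conn {{p, q}}\<close> by simp
  next
    case False
    hence "z = q" using assms by simp
    thus ?thesis using \<open>(q, p) \<in> conn {{p, q}}\<close> by simp
  qed
qed

lemma acyclic_K2: "p \<noteq> q \<Longrightarrow> acyclic_edges {{p, q}}"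
  unfolding acyclic_edges_def
proof (intro ballI allI impI)
  fix e u w assume pq: "p \<noteq> q" and e: "e \<in> {{p, q}}" "e = {u, w}"
  hence "u \<noteq> w" by (auto simp: doubleton_eq_iff)
  moreover have "{{p, q}} - {e} = {}" using e by auto
  ultimately show "(u, w) \<notin> conn ({{p, q}} - {e})" by simp
qed

lemma SF_K2_1: "p \<noteq> q \<Longrightarrow> spanning_forests ({p, q}, {{p, q}}) 1 = {{{p, q}}}"
proof -
  assume pq: "p \<noteq> q"
  have "F \<in> spanning_forests ({p, q}, {{p, q}}) 1 \<longleftrightarrow> F = {{p, q}}" for F
  proof
    assume "F \<in> spanning_forests ({p, q}, {{p, q}}) 1"
    hence "F \<subseteq> {{p, q}}" "card F = 1" unfolding spanning_forests_def by auto
    from subset_singletonD[OF this(1)] this(2) show "F = {{p, q}}" by auto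
  next
    assume "F = {{p, q}}"
    thus "F \<in> spanning_forests ({p, q}, {{p, q}}) 1"
      unfolding spanning_forests_def using acyclic_K2[OF pq] by simp
  qed
  thus ?thesis by blast
qed

lemma qpoly_K2:
  assumes pq: "p \<noteq> q" shows "qpoly ({p, q}, {{p, q}}) X = [:1, wt X {p, q}:]"
proof (rule poly_eqI)
  fix s
  note w = wf_K2[OF pq]
  show "coeff (qpoly ({p, q}, {{p, q}}) X) s = coeff [:1, wt X {p, q}:] s"
  proof (cases s)
    case 0
    have "Q ({p, q}, {{p, q}}) X 0 = 1"
      unfolding Q_def SF_0[OF w] using pq by (simp add: quot_pair)
    thus ?thesis using 0 by (simp add: coeff_qpoly[OF w])
  next
    case (Suc n)
    show ?thesis
    proof (cases n)
      case 0
      have "{p, q} // conn {{p, q}} = {{p, q}}"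
        unfolding quot_pair using conn_K2[of p p q] conn_K2[of q p q] by simp
      hence "Q ({p, q}, {{p, q}}) X 1 = wt X {p, q}"
        unfolding Q_def SF_K2_1[OF pq] by simp
      thus ?thesis using \<open>s = Suc n\<close> 0 by (simp add: coeff_qpoly[OF w])
    next
      case (Suc m)
      have "Q ({p, q}, {{p, q}}) X s = 0" by (rule Q_big[OF w]) (use \<open>s = Suc n\<close> Suc in simp)
      thus ?thesis using \<open>s = Suc n\<close> Suc by (simp add: coeff_qpoly[OF w])
    qed
  qed
qed



definition pedges :: "'a list \<Rightarrow> 'a set set" where
  "pedges vs = {{vs ! i, vs ! Suc i} | i. Suc i < length vs}"

primrec pnm :: "nat \<Rightarrow> int poly \<times> int poly" where
  "pnm 0 = (1, 1)"
| "pnm (Suc k) = ([:0, 1:] * snd (pnm k) + [:1, 1:] * fst (pnm k), [:0, 1:] * snd (pnm k) + fst (pnm k))"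

definition pn :: "nat \<Rightarrow> int poly" where "pn k = fst (pnm k)"
definition pm :: "nat \<Rightarrow> int poly" where "pm k = snd (pnm k)"

lemma pn_0 [simp]: "pn 0 = 1" and pm_0 [simp]: "pm 0 = 1"
  unfolding pn_def pm_def by simp_all

lemma pn_Suc: "pn (Suc k) = [:0, 1:] * pm k + [:1, 1:] * pn k"
  and pm_Suc: "pm (Suc k) = [:0, 1:] * pm k + pn k"
  unfolding pn_def pm_def by simp_all

lemma pedges_single: "pedges [v] = {}"
  unfolding pedges_def by simp

lemma pedges_cons2: "pedges (v # w # rest) = insert {v, w} (pedges (w # rest))"
proof
  show "pedges (v # w # rest) \<subseteq> insert {v, w} (pedges (w # rest))"
  proof
    fix e assume "e \<in> pedges (v # w # rest)"
    then obtain i where i: "e = {(v # w # rest) ! i, (v # w # rest) ! Suc i}" "Suc i < length (v # w # rest)"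
      unfolding pedges_def by blast
    show "e \<in> insert {v, w} (pedges (w # rest))"
    proof (cases i)
      case 0
      thus ?thesis using i by simp
    next
      case (Suc j)
      hence "e = {(w # rest) ! j, (w # rest) ! Suc j}" "Suc j < length (w # rest)" using i by auto
      thus ?thesis unfolding pedges_def by blast
    qed
  qed
  show "insert {v, w} (pedges (w # rest)) \<subseteq> pedges (v # w # rest)"
  proof
    fix e assume "e \<in> insert {v, w} (pedges (w # rest))"
    hence "e = {v, w} \<or> e \<in> pedges (w # rest)" by simp
    thus "e \<in> pedges (v # w # rest)"
    proof
      assume "e = {v, w}"
      hence "e = {(v # w # rest) ! 0, (v # w # rest) ! Suc 0}" "Suc 0 < length (v # w # rest)" by auto
      thus ?thesis unfolding pedges_def by blast
    next
      assume "e \<in> pedges (w # rest)"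
      then obtain j where j: "e = {(w # rest) ! j, (w # rest) ! Suc j}" "Suc j < length (w # rest)"
        unfolding pedges_def by blast
      hence "e = {(v # w # rest) ! Suc j, (v # w # rest) ! Suc (Suc j)}" "Suc (Suc j) < length (v # w # rest)"
        by auto
      thus ?thesis unfolding pedges_def by blast
    qed
  qed
qed

lemma wf_path: "distinct vs \<Longrightarrow> wf_graph (set vs, pedges vs)"
  unfolding wf_graph_def
proof (intro conjI ballI)
  assume d: "distinct vs"
  show "finite (verts (set vs, pedges vs))" by simp
  fix e assume "e \<in> edges (set vs, pedges vs)"
  then obtain i where i: "e = {vs ! i, vs ! Suc i}" "Suc i < length vs"
    unfolding pedges_def by auto
  have "vs ! i \<noteq> vs ! Suc i" using d i(2) by (simp add: nth_eq_iff_index_eq)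
  moreover have "vs ! i \<in> set vs" "vs ! Suc i \<in> set vs" using i(2) by auto
  ultimately show "\<exists>u v. u \<noteq> v \<and> e = {u, v} \<and> u \<in> verts (set vs, pedges vs) \<and> v \<in> verts (set vs, pedges vs)"
    using i(1) by (intro exI[of _ "vs ! i"] exI[of _ "vs ! Suc i"]) simp
qed

lemma path_split: "(set (v # w # rest), pedges (v # w # rest)) =
    graph_union ({v, w}, {{v, w}}) (set (w # rest), pedges (w # rest))"
  unfolding graph_union_def pedges_cons2 by (simp, blast)

lemma wt_pair0: "p \<noteq> q \<Longrightarrow> wt {} {p, q} = 2" unfolding wt_def by simp
lemma wt_pair1: "p \<noteq> q \<Longrightarrow> wt {p} {p, q} = 1" unfolding wt_def by simp
lemma wt_pair1': "p \<noteq> q \<Longrightarrow> wt {q} {p, q} = 1" unfolding wt_def by simp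
lemma wt_pair2: "p \<noteq> q \<Longrightarrow> wt {q, p} {p, q} = 0" unfolding wt_def by (simp add: insert_commute)

lemma path_poly:
  "distinct vs \<Longrightarrow> vs \<noteq> [] \<Longrightarrow>
    qpoly (set vs, pedges vs) {} = pn (length vs - 1) \<and> qpoly (set vs, pedges vs) {hd vs} = pm (length vs - 1)"
proof (induction vs rule: induct_list012)
  case 1
  then show ?case by simp
next
  case (2 x)
  then show ?case by (simp add: pedges_single qpoly_single)
next
  case (3 x y zs)
  have d: "distinct (y # zs)" and xn: "x \<notin> set (y # zs)" using "3.prems" by auto
  have xy: "x \<noteq> y" using xn by simp
  have IH: "qpoly (set (y # zs), pedges (y # zs)) {} = pn (length (y # zs) - 1)"
    "qpoly (set (y # zs), pedges (y # zs)) {y} = pm (length (y # zs) - 1)"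
    using "3.IH"(2)[OF d] by auto
  let ?K = "({x, y}, {{x, y}}) :: 'a graph" and ?T = "(set (y # zs), pedges (y # zs))"
  have wK: "wf_graph ?K" using wf_K2[OF xy] .
  have wT: "wf_graph ?T" using wf_path[OF d] .
  have I: "verts ?K \<inter> verts ?T = {y}" using xn by auto
  define n where "n = pn (length (y # zs) - 1)"
  define m where "m = pm (length (y # zs) - 1)"
  have len: "length (x # y # zs) - 1 = Suc (length (y # zs) - 1)" by simp
  have "qpoly (set (x # y # zs), pedges (x # y # zs)) {} =
      qpoly ?K {} * qpoly ?T {y} + qpoly ?K {y} * qpoly ?T {} - qpoly ?K {y} * qpoly ?T {y}"
    unfolding path_split using qpoly_glue[OF wK wT I, of "{}"] by simp
  also have "\<dots> = [:1, 2:] * m + [:1, 1:] * n - [:1, 1:] * m"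
    using IH xy unfolding n_def m_def by (simp add: qpoly_K2 wt_pair0 wt_pair1')
  also have "\<dots> = pn (length (x # y # zs) - 1)"
  proof -
    have e: "[:1, 2:] = [:1, 1:] + ([:0, 1:] :: int poly)" by simp
    have "([:1, 1:] + [:0, 1:]) * m + [:1, 1:] * n - [:1, 1:] * m = [:0, 1:] * m + [:1, 1:] * (n :: int poly)"
      by algebra
    hence "[:1, 2:] * m + [:1, 1:] * n - [:1, 1:] * m = [:0, 1:] * m + [:1, 1:] * n"
      by (simp only: e)
    thus ?thesis unfolding len pn_Suc n_def m_def by simp
  qed
  finally have A: "qpoly (set (x # y # zs), pedges (x # y # zs)) {} = pn (length (x # y # zs) - 1)" .
  have X1: "{x} \<inter> verts ?K = {x}" and X2: "{x} \<inter> verts ?T = {}" using xn by auto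
  have yx: "y \<notin> {x}" using xy by simp
  have "qpoly (set (x # y # zs), pedges (x # y # zs)) {x} =
      qpoly ?K {x} * qpoly ?T {y} + qpoly ?K {y, x} * qpoly ?T {} - qpoly ?K {y, x} * qpoly ?T {y}"
    unfolding path_split qpoly_glue[OF wK wT I yx] X1 X2 by simp
  also have "\<dots> = [:1, 1:] * m + n - m"
    using IH xy unfolding n_def m_def by (simp add: qpoly_K2 wt_pair1 wt_pair2)
  also have "\<dots> = pm (length (x # y # zs) - 1)"
  proof -
    have e: "[:1, 1:] = 1 + ([:0, 1:] :: int poly)" by (simp add: one_pCons)
    have "(1 + [:0, 1:]) * m + n - m = [:0, 1:] * m + (n :: int poly)"
      by algebra
    hence "[:1, 1:] * m + n - m = [:0, 1:] * m + n"
      by (simp only: e)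
    thus ?thesis unfolding len pm_Suc n_def m_def by simp
  qed
  finally show ?case using A by simp
qed



definition nonneg :: "int poly \<Rightarrow> bool" where "nonneg p \<longleftrightarrow> (\<forall>i. coeff p i \<ge> 0)"

lemma nonneg_mult: "nonneg p \<Longrightarrow> nonneg q \<Longrightarrow> nonneg (p * q)"
  unfolding nonneg_def coeff_mult by (auto intro!: sum_nonneg mult_nonneg_nonneg)

lemma nonneg_add: "nonneg p \<Longrightarrow> nonneg q \<Longrightarrow> nonneg (p + q)"
  unfolding nonneg_def by (simp add: add_nonneg_nonneg)

lemma nonneg_t: "nonneg [:0, 1:]"
  unfolding nonneg_def by (simp add: coeff_pCons split: nat.split)

lemma nonneg_1t: "nonneg [:1, 1:]"
  unfolding nonneg_def by (simp add: coeff_pCons split: nat.split)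

lemma nonneg_shift: "nonneg p \<Longrightarrow> nonneg (pCons 0 p)"
  unfolding nonneg_def by (simp add: coeff_pCons split: nat.split)

lemma nonneg_tmult: "nonneg p \<Longrightarrow> nonneg ([:0, 1:] * p)"
  using nonneg_shift by simp

lemma nonneg_pnm: "nonneg (pn k) \<and> nonneg (pm k)"
proof (induction k)
  case 0
  then show ?case unfolding nonneg_def by (simp add: coeff_1)
next
  case (Suc k)
  have "nonneg ([:0, 1:] * pm k)" using nonneg_tmult Suc.IH by blast
  moreover have "nonneg ([:1, 1:] * pn k)" using nonneg_1t nonneg_mult Suc.IH by blast
  ultimately have "nonneg ([:0, 1:] * pm k + [:1, 1:] * pn k)" "nonneg ([:0, 1:] * pm k + pn k)"
    using nonneg_add Suc.IH by blast+
  then show ?case unfolding pn_Suc pm_Suc by simp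
qed

definition W :: "nat \<Rightarrow> nat \<Rightarrow> int poly" where "W j k = pm j * pn k - pn j * pm k"

lemma W_SS: "W (Suc j) (Suc k) = [:0, 1:] * [:0, 1:] * W j k"
proof -
  have e: "[:1, 1:] = 1 + ([:0, 1:] :: int poly)" by (simp add: one_pCons)
  define t where "t = ([:0, 1:] :: int poly)"
  have "([:0, 1:] * pm j + pn j) * ([:0, 1:] * pm k + (1 + [:0, 1:]) * pn k)
      - ([:0, 1:] * pm j + (1 + [:0, 1:]) * pn j) * ([:0, 1:] * pm k + pn k)
      = [:0, 1:] * [:0, 1:] * (pm j * pn k - pn j * pm k)"
    unfolding t_def[symmetric] by algebra
  thus ?thesis unfolding W_def pn_Suc pm_Suc e .
qed

lemma W_0S: "W 0 (Suc k) = [:0, 1:] * pn k"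
proof -
  have e: "[:1, 1:] = 1 + ([:0, 1:] :: int poly)" by (simp add: one_pCons)
  define t where "t = ([:0, 1:] :: int poly)"
  have "([:0, 1:] * pm k + (1 + [:0, 1:]) * pn k) - ([:0, 1:] * pm k + pn k) = [:0, 1:] * pn k"
    unfolding t_def[symmetric] by algebra
  thus ?thesis unfolding W_def pn_Suc pm_Suc e by simp
qed

lemma W_nonneg: "j \<le> k \<Longrightarrow> nonneg (W j k)"
proof (induction j arbitrary: k)
  case 0
  show ?case
  proof (cases k)
    case 0
    then show ?thesis unfolding W_def nonneg_def by simp
  next
    case (Suc k')
    have "nonneg (W 0 (Suc k'))" unfolding W_0S using nonneg_tmult nonneg_pnm by blast
    then show ?thesis using Suc by simp
  qed
next
  case (Suc j)
  then obtain k' where k: "k = Suc k'" "j \<le> k'" by (cases k) auto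
  have "nonneg ([:0, 1:] * ([:0, 1:] * W j k'))" using nonneg_tmult Suc.IH[OF k(2)] by blast
  thus ?case unfolding k(1) W_SS by (simp add: mult.assoc)
qed



definition rename :: "('a \<Rightarrow> 'a) \<Rightarrow> 'a graph \<Rightarrow> 'a graph" where
  "rename f G = (f ` verts G, (\<lambda>e. f ` e) ` edges G)"

lemma verts_rename [simp]: "verts (rename f G) = f ` verts G"
  unfolding rename_def by simp
lemma edges_rename [simp]: "edges (rename f G) = (\<lambda>e. f ` e) ` edges G"
  unfolding rename_def by simp

lemma wf_rename:
  assumes w: "wf_graph G" and inj: "inj_on f (verts G)" shows "wf_graph (rename f G)"
  unfolding wf_graph_def
proof (intro conjI ballI)
  show "finite (verts (rename f G))" using wf_fin[OF w] by simp
  fix e' assume "e' \<in> edges (rename f G)"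
  then obtain e where e: "e \<in> edges G" "e' = f ` e" by auto
  then obtain u w where uw: "u \<noteq> w" "e = {u, w}" "u \<in> verts G" "w \<in> verts G" using wf_edge[OF w] by metis
  have "f u \<noteq> f w" using uw inj unfolding inj_on_def by blast
  thus "\<exists>u v. u \<noteq> v \<and> e' = {u, v} \<and> u \<in> verts (rename f G) \<and> v \<in> verts (rename f G)"
    using uw e by (intro exI[of _ "f u"] exI[of _ "f w"]) simp
qed

lemma conn_image_sup:
  assumes "(u, z) \<in> conn F"
  shows "(f u, f z) \<in> conn ((\<lambda>e. f ` e) ` F)"
proof -
  have "(u, z) \<in> {(a, b). {a, b} \<in> F}\<^sup>*" using assms unfolding conn_def .
  thus ?thesis
  proof (induction rule: rtrancl_induct)
    case base
    then show ?case by simp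
  next
    case (step y z)
    hence "{y, z} \<in> F" by simp
    hence "f ` {y, z} \<in> (\<lambda>e. f ` e) ` F" by (rule imageI)
    hence "{f y, f z} \<in> (\<lambda>e. f ` e) ` F" by simp
    hence "(f y, f z) \<in> conn ((\<lambda>e. f ` e) ` F)" by (rule conn_edge)
    thus ?case using conn_trans[OF step.IH] by simp
  qed
qed

lemma conn_image:
  assumes E2: "\<forall>e\<in>F. \<exists>p q. e = {p, q}" and sub: "\<forall>e\<in>F. e \<subseteq> V"
    and inj: "inj_on f V" and u: "u \<in> V"
  shows "conn ((\<lambda>e. f ` e) ` F) `` {f u} = f ` (conn F `` {u})"
proof
  show "f ` (conn F `` {u}) \<subseteq> conn ((\<lambda>e. f ` e) ` F) `` {f u}"
  proof
    fix z assume "z \<in> f ` (conn F `` {u})"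
    then obtain c where "(u, c) \<in> conn F" "z = f c" by blast
    thus "z \<in> conn ((\<lambda>e. f ` e) ` F) `` {f u}" using conn_image_sup[of u c F f] by simp
  qed
  have CV: "conn F `` {u} \<subseteq> V" using conn_class_sub[OF sub u] .
  show "conn ((\<lambda>e. f ` e) ` F) `` {f u} \<subseteq> f ` (conn F `` {u})"
  proof
    fix z' assume "z' \<in> conn ((\<lambda>e. f ` e) ` F) `` {f u}"
    hence "(f u, z') \<in> {(a, b). {a, b} \<in> (\<lambda>e. f ` e) ` F}\<^sup>*" unfolding conn_def by simp
    thus "z' \<in> f ` (conn F `` {u})"
    proof (induction rule: rtrancl_induct)
      case base
      then show ?case by simp
    next
      case (step y z)
      then obtain c where c: "c \<in> conn F `` {u}" "y = f c" by blast
      have cV: "c \<in> V" using c CV by blast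
      from step(2) have "{y, z} \<in> (\<lambda>e. f ` e) ` F" by simp
      then obtain e where e: "e \<in> F" "{y, z} = f ` e" by blast
      then obtain p q where pq: "e = {p, q}" using E2 by blast
      have pV: "p \<in> V" and qV: "q \<in> V" using sub e pq by auto
      have ye: "y \<in> f ` e" and ze: "z \<in> f ` e" using e by auto
      have cE: "c \<in> e"
      proof -
        obtain r where "r \<in> e" "f r = y" using ye by blast
        moreover have "r \<in> V" using \<open>r \<in> e\<close> sub e(1) by blast
        ultimately have "r = c" using inj cV c(2) unfolding inj_on_def by metis
        thus ?thesis using \<open>r \<in> e\<close> by simp
      qed
      obtain r where r: "r \<in> e" "z = f r" using ze by blast
      have "(c, r) \<in> conn F"
      proof (cases "r = c")
        case True thus ?thesis by simp
      next
        case False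
        have "e = {c, r}" using cE r(1) False pq by auto
        thus ?thesis using e(1) by (simp add: conn_edge)
      qed
      moreover have "(u, c) \<in> conn F" using c(1) by simp
      ultimately have "(u, r) \<in> conn F" using conn_trans[of u c F r] by simp
      hence "r \<in> conn F `` {u}" by simp
      thus ?case using r(2) by blast
    qed
  qed
qed



lemma conn_image_iff:
  assumes w: "wf_graph G" and inj: "inj_on f (verts G)" and F: "F \<subseteq> edges G"
    and u: "u \<in> verts G" and v: "v \<in> verts G"
  shows "(f u, f v) \<in> conn ((\<lambda>e. f ` e) ` F) \<longleftrightarrow> (u, v) \<in> conn F"
proof -
  have E2: "\<forall>e\<in>F. \<exists>p q. e = {p, q}" using F wf_two[OF w] by blast
  have sub: "\<forall>e\<in>F. e \<subseteq> verts G" using F wf_sub[OF w] by blast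
  have ci: "conn ((\<lambda>e. f ` e) ` F) `` {f u} = f ` (conn F `` {u})"
    using conn_image[OF E2 sub inj u] .
  have CV: "conn F `` {u} \<subseteq> verts G" using conn_class_sub[OF sub u] .
  have A: "(f u, f v) \<in> conn ((\<lambda>e. f ` e) ` F) \<longleftrightarrow> f v \<in> f ` (conn F `` {u})"
    using ci by blast
  have B: "f v \<in> f ` (conn F `` {u}) \<longleftrightarrow> v \<in> conn F `` {u}" using inj_on_image_mem_iff[OF inj v CV] .
  have C: "v \<in> conn F `` {u} \<longleftrightarrow> (u, v) \<in> conn F" by simp
  show ?thesis using A B C by blast
qed

lemma acyc_image:
  assumes w: "wf_graph G" and inj: "inj_on f (verts G)" and F: "F \<subseteq> edges G"
    and ac: "acyclic_edges F"
  shows "acyclic_edges ((\<lambda>e. f ` e) ` F)"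
  unfolding acyclic_edges_def
proof (intro ballI allI impI)
  fix e' u' w' assume e': "e' \<in> (\<lambda>e. f ` e) ` F" "e' = {u', w'}"
  then obtain e where e: "e \<in> F" "e' = f ` e" by blast
  then obtain p q where pq: "p \<noteq> q" "e = {p, q}" "p \<in> verts G" "q \<in> verts G"
    using wf_edge[OF w] F by blast
  have injP: "inj_on (\<lambda>e. f ` e) (Pow (verts G))" using inj_on_image_Pow[OF inj] .
  have FP: "F \<subseteq> Pow (verts G)" using F wf_sub[OF w] by blast
  have diff: "(\<lambda>e. f ` e) ` F - {e'} = (\<lambda>e. f ` e) ` (F - {e})"
  proof -
    have "(\<lambda>e. f ` e) ` (F - {e}) = (\<lambda>e. f ` e) ` F - (\<lambda>e. f ` e) ` {e}"
      by (rule inj_on_image_set_diff[OF injP]) (use FP e(1) in auto)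
    thus ?thesis using e(2) by simp
  qed
  have F': "F - {e} \<subseteq> edges G" using F by blast
  have npq: "(p, q) \<notin> conn (F - {e})" using ac e(1) pq(2) unfolding acyclic_edges_def by blast
  have "{u', w'} = {f p, f q}" using e' e pq by simp
  hence cases: "(u' = f p \<and> w' = f q) \<or> (u' = f q \<and> w' = f p)" by (simp add: doubleton_eq_iff)
  show "(u', w') \<notin> conn ((\<lambda>e. f ` e) ` F - {e'})"
    unfolding diff
  proof
    assume uw: "(u', w') \<in> conn ((\<lambda>e. f ` e) ` (F - {e}))"
    from cases show False
    proof
      assume "u' = f p \<and> w' = f q"
      hence "(p, q) \<in> conn (F - {e})" using uw conn_image_iff[OF w inj F' pq(3) pq(4)] by simp
      thus False using npq by simp
    next
      assume "u' = f q \<and> w' = f p"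
      hence "(q, p) \<in> conn (F - {e})" using uw conn_image_iff[OF w inj F' pq(4) pq(3)] by simp
      hence "(p, q) \<in> conn (F - {e})" by (rule conn_sym)
      thus False using npq by simp
    qed
  qed
qed

lemma rename_inv:
  assumes w: "wf_graph G" and inj: "inj_on f (verts G)"
  shows "rename (inv_into (verts G) f) (rename f G) = G"
proof -
  have V: "inv_into (verts G) f ` f ` verts G = verts G" using inj by simp
  have E: "(\<lambda>e. inv_into (verts G) f ` e) ` (\<lambda>e. f ` e) ` edges G = edges G"
  proof -
    have "(\<lambda>e. inv_into (verts G) f ` e) ` (\<lambda>e. f ` e) ` edges G = (\<lambda>e. inv_into (verts G) f ` f ` e) ` edges G"
      by (simp add: image_image)
    also have "\<dots> = (\<lambda>e. e) ` edges G"
      by (rule image_cong) (use wf_sub[OF w] inj in auto)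
    finally show ?thesis by simp
  qed
  show ?thesis unfolding rename_def using V E by (simp add: verts_def edges_def)
qed

lemma wt_image:
  assumes inj: "inj_on f V" and X: "X \<subseteq> V" and C: "C \<subseteq> V"
  shows "wt (f ` X) (f ` C) = wt X C"
proof -
  have I: "f ` X \<inter> f ` C = f ` (X \<inter> C)" using inj_on_image_Int[OF inj X C] by simp
  have c1: "card (f ` (X \<inter> C)) = card (X \<inter> C)"
    by (rule card_image) (rule inj_on_subset[OF inj], use C in auto)
  have c2: "card (f ` C) = card C" by (rule card_image) (rule inj_on_subset[OF inj C])
  show ?thesis unfolding wt_def I c1 c2 by simp
qed

lemma quot_image_eq: "A // r = (\<lambda>x. r `` {x}) ` A"
  unfolding quotient_def by auto

lemma Q_rename:
  assumes w: "wf_graph G" and inj: "inj_on f (verts G)" and X: "X \<subseteq> verts G"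
  shows "Q (rename f G) (f ` X) s = Q G X s"
proof -
  let ?fi = "\<lambda>e. f ` e"
  let ?g = "inv_into (verts G) f"
  have w': "wf_graph (rename f G)" using wf_rename[OF w inj] .
  have injg: "inj_on ?g (verts (rename f G))" by (simp add: inj_on_inv_into)
  have EP: "edges G \<subseteq> Pow (verts G)" using wf_sub[OF w] by blast
  have injE: "inj_on ?fi (edges G)" using inj_on_subset[OF inj_on_image_Pow[OF inj] EP] .
  have bij: "bij_betw (\<lambda>F. ?fi ` F) (spanning_forests G s) (spanning_forests (rename f G) s)"
    unfolding bij_betw_def
  proof
    have "inj_on (\<lambda>F. ?fi ` F) (Pow (edges G))" using inj_on_image_Pow[OF injE] .
    moreover have "spanning_forests G s \<subseteq> Pow (edges G)" unfolding spanning_forests_def by blast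
    ultimately show "inj_on (\<lambda>F. ?fi ` F) (spanning_forests G s)" by (rule inj_on_subset)
    show "(\<lambda>F. ?fi ` F) ` spanning_forests G s = spanning_forests (rename f G) s"
    proof
      show "(\<lambda>F. ?fi ` F) ` spanning_forests G s \<subseteq> spanning_forests (rename f G) s"
      proof
        fix F' assume "F' \<in> (\<lambda>F. ?fi ` F) ` spanning_forests G s"
        then obtain F where F: "F \<in> spanning_forests G s" "F' = ?fi ` F" by blast
        hence Fs: "F \<subseteq> edges G" "card F = s" "acyclic_edges F" unfolding spanning_forests_def by auto
        have "card F' = s" using F(2) Fs(2) card_image[OF inj_on_subset[OF injE Fs(1)]] by simp
        moreover have "acyclic_edges F'" using acyc_image[OF w inj Fs(1) Fs(3)] F(2) by simp
        moreover have "F' \<subseteq> edges (rename f G)" using F(2) Fs(1) by auto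
        ultimately show "F' \<in> spanning_forests (rename f G) s" unfolding spanning_forests_def by simp
      qed
      show "spanning_forests (rename f G) s \<subseteq> (\<lambda>F. ?fi ` F) ` spanning_forests G s"
      proof
        fix F' assume F': "F' \<in> spanning_forests (rename f G) s"
        hence Fs: "F' \<subseteq> edges (rename f G)" "card F' = s" "acyclic_edges F'"
          unfolding spanning_forests_def by auto
        define F where "F = (\<lambda>e. ?g ` e) ` F'"
        have bk: "(\<lambda>e. ?g ` e) ` edges (rename f G) = edges G"
          using rename_inv[OF w inj] unfolding rename_def edges_def by (metis snd_conv)
        have FE: "F \<subseteq> edges G" unfolding F_def using Fs(1) bk by blast
        have FF': "?fi ` F = F'"
        proof -
          have "?fi ` F = (\<lambda>e. f ` ?g ` e) ` F'" unfolding F_def by (simp add: image_image)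
          also have "\<dots> = (\<lambda>e. e) ` F'"
          proof (rule image_cong)
            fix e assume "e \<in> F'"
            hence "e \<in> edges (rename f G)" using Fs(1) by blast
            hence "e \<subseteq> verts (rename f G)" using wf_sub[OF w'] by blast
            hence "e \<subseteq> f ` verts G" by simp
            thus "f ` ?g ` e = e" by (simp add: image_inv_into_cancel)
          qed simp
          finally show ?thesis by simp
        qed
        have "card F = s" using FF' Fs(2) card_image[OF inj_on_subset[OF injE FE]] by simp
        moreover have "acyclic_edges F"
          unfolding F_def by (rule acyc_image[OF w' injg Fs(1) Fs(3)])
        ultimately have "F \<in> spanning_forests G s" using FE unfolding spanning_forests_def by simp
        thus "F' \<in> (\<lambda>F. ?fi ` F) ` spanning_forests G s" using FF' by blast
      qed
    qed
  qed
  have trm: "(\<Prod>C\<in>verts (rename f G) // conn (?fi ` F). wt (f ` X) C) =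
              (\<Prod>C\<in>verts G // conn F. wt X C)" if F: "F \<in> spanning_forests G s" for F
  proof -
    have Fs: "F \<subseteq> edges G" using F unfolding spanning_forests_def by auto
    have E2: "\<forall>e\<in>F. \<exists>p q. e = {p, q}" using Fs wf_two[OF w] by blast
    have sub: "\<forall>e\<in>F. e \<subseteq> verts G" using Fs wf_sub[OF w] by blast
    have Q: "verts (rename f G) // conn (?fi ` F) = ?fi ` (verts G // conn F)"
    proof -
      have "verts (rename f G) // conn (?fi ` F) = (\<lambda>u. conn (?fi ` F) `` {f u}) ` verts G"
        unfolding quot_image_eq by (simp add: image_image)
      also have "\<dots> = (\<lambda>u. f ` (conn F `` {u})) ` verts G"
        by (rule image_cong) (simp_all add: conn_image[OF E2 sub inj])
      also have "\<dots> = ?fi ` (verts G // conn F)"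
        unfolding quot_image_eq by (simp add: image_image)
      finally show ?thesis .
    qed
    have CP: "verts G // conn F \<subseteq> Pow (verts G)"
      using conn_class_sub[OF sub] unfolding quot_image_eq by blast
    have injQ: "inj_on ?fi (verts G // conn F)" using inj_on_subset[OF inj_on_image_Pow[OF inj] CP] .
    have "(\<Prod>C\<in>verts (rename f G) // conn (?fi ` F). wt (f ` X) C) =
          (\<Prod>C\<in>verts G // conn F. wt (f ` X) (f ` C))"
      unfolding Q using prod.reindex[OF injQ] by simp
    also have "\<dots> = (\<Prod>C\<in>verts G // conn F. wt X C)"
    proof (rule prod.cong)
      fix C assume "C \<in> verts G // conn F"
      hence "C \<subseteq> verts G" using CP by blast
      thus "wt (f ` X) (f ` C) = wt X C" using wt_image[OF inj X] by simp
    qed simp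
    finally show ?thesis .
  qed
  have "Q (rename f G) (f ` X) s = (\<Sum>F\<in>spanning_forests G s.
          \<Prod>C\<in>verts (rename f G) // conn (?fi ` F). wt (f ` X) C)"
    unfolding Q_def using sum.reindex_bij_betw[OF bij,
        of "\<lambda>F'. \<Prod>C\<in>verts (rename f G) // conn F'. wt (f ` X) C"] by simp
  also have "\<dots> = Q G X s" unfolding Q_def by (rule sum.cong[OF refl]) (rule trm)
  finally show ?thesis .
qed

lemma qpoly_rename:
  assumes w: "wf_graph G" and inj: "inj_on f (verts G)" and X: "X \<subseteq> verts G"
  shows "qpoly (rename f G) (f ` X) = qpoly G X"
  by (rule poly_eqI) (simp add: coeff_qpoly w wf_rename[OF w inj] Q_rename[OF w inj X])



lemma image_if_id: "w \<notin> A \<Longrightarrow> (\<lambda>z. if z = w then u else z) ` A = A"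
proof -
  assume "w \<notin> A"
  hence "(\<lambda>z. if z = w then u else z) ` A = (\<lambda>z. z) ` A" by (intro image_cong) auto
  thus ?thesis by simp
qed

lemma identify_union:
  assumes w1: "wf_graph G1" and wn: "w \<notin> verts G1"
  shows "identify (graph_union G1 G2) u w = graph_union G1 (rename (\<lambda>z. if z = w then u else z) G2)"
proof -
  let ?f = "\<lambda>z. if z = w then u else z"
  have V: "?f ` verts G1 = verts G1" using image_if_id[OF wn] .
  have E: "(\<lambda>e. ?f ` e) ` edges G1 = edges G1"
  proof -
    have "(\<lambda>e. ?f ` e) ` edges G1 = (\<lambda>e. e) ` edges G1"
    proof (rule image_cong)
      fix e assume "e \<in> edges G1"
      hence "w \<notin> e" using wf_sub[OF w1] wn by blast
      thus "?f ` e = e" by (rule image_if_id)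
    qed simp
    thus ?thesis by simp
  qed
  have "identify (graph_union G1 G2) u w = (?f ` (verts G1 \<union> verts G2), (\<lambda>e. ?f ` e) ` (edges G1 \<union> edges G2))"
    by (simp only: identify_def Let_def verts_union edges_union)
  also have "\<dots> = (verts G1 \<union> ?f ` verts G2, edges G1 \<union> (\<lambda>e. ?f ` e) ` edges G2)"
    by (simp only: image_Un V E)
  also have "\<dots> = graph_union G1 (rename ?f G2)"
    by (simp only: graph_union_def rename_def verts_def edges_def fst_conv snd_conv)
  finally show ?thesis .
qed

lemma inj_if: "u \<notin> A \<Longrightarrow> inj_on (\<lambda>z. if z = w then u else z) A"
  unfolding inj_on_def by auto

lemma rename_comp: "rename f2 (rename f1 G) = rename (f2 \<circ> f1) G"
  unfolding rename_def by (simp add: image_image image_comp verts_def edges_def)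

lemma auto_rename:
  assumes w: "wf_graph H" and eta: "is_automorphism H \<eta>"
  shows "rename \<eta> H = H"
proof -
  have bij: "bij_betw \<eta> (verts H) (verts H)" and iff: "\<forall>u\<in>verts H. \<forall>v\<in>verts H. {u, v} \<in> edges H \<longleftrightarrow> {\<eta> u, \<eta> v} \<in> edges H"
    using eta unfolding is_automorphism_def by auto
  have V: "\<eta> ` verts H = verts H" using bij by (simp add: bij_betw_def)
  have inj: "inj_on \<eta> (verts H)" using bij by (simp add: bij_betw_def)
  have E: "(\<lambda>e. \<eta> ` e) ` edges H = edges H"
  proof
    show "(\<lambda>e. \<eta> ` e) ` edges H \<subseteq> edges H"
    proof
      fix e' assume "e' \<in> (\<lambda>e. \<eta> ` e) ` edges H"
      then obtain e where e: "e \<in> edges H" "e' = \<eta> ` e" by blast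
      then obtain p q where pq: "e = {p, q}" "p \<in> verts H" "q \<in> verts H" using wf_edge[OF w] by blast
      have "{\<eta> p, \<eta> q} \<in> edges H" using iff pq e by blast
      thus "e' \<in> edges H" using e pq by simp
    qed
    show "edges H \<subseteq> (\<lambda>e. \<eta> ` e) ` edges H"
    proof
      fix e assume e: "e \<in> edges H"
      then obtain p q where pq: "e = {p, q}" "p \<in> verts H" "q \<in> verts H" using wf_edge[OF w] by blast
      let ?p = "inv_into (verts H) \<eta> p" and ?q = "inv_into (verts H) \<eta> q"
      have pV: "?p \<in> verts H" "?q \<in> verts H" using pq V by (auto intro: inv_into_into)
      have ep: "\<eta> ?p = p" "\<eta> ?q = q" using pq V by (auto intro: f_inv_into_f)
      have "{?p, ?q} \<in> edges H" using iff pV ep e pq by metis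
      moreover have "e = \<eta> ` {?p, ?q}" using ep pq by simp
      ultimately show "e \<in> (\<lambda>e. \<eta> ` e) ` edges H" by blast
    qed
  qed
  show ?thesis unfolding rename_def using V E by (simp add: verts_def edges_def)
qed

lemma class_props:
  assumes w: "wf_graph G" and F: "F \<subseteq> edges G" and C: "C \<in> verts G // conn F"
  shows "finite C" "C \<noteq> {}"
proof -
  have sub: "\<forall>e\<in>F. e \<subseteq> verts G" using F wf_sub[OF w] by blast
  obtain u where u: "u \<in> verts G" "C = conn F `` {u}" using C unfolding quot_mem by blast
  have "C \<subseteq> verts G" using conn_class_sub[OF sub u(1)] u(2) by simp
  thus "finite C" using wf_fin[OF w] finite_subset by blast
  have "u \<in> C" using u(2) by simp
  thus "C \<noteq> {}" by blast
qed

lemma Q_mono: "wf_graph G \<Longrightarrow> Q G {d} s \<le> Q G {} s"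
  unfolding Q_def
proof (rule sum_mono)
  fix F assume w: "wf_graph G" and F: "F \<in> spanning_forests G s"
  hence Fs: "F \<subseteq> edges G" unfolding spanning_forests_def by auto
  show "(\<Prod>C\<in>verts G // conn F. wt {d} C) \<le> (\<Prod>C\<in>verts G // conn F. wt {} C)"
  proof (rule prod_mono, rule conjI)
    fix C assume C: "C \<in> verts G // conn F"
    show "0 \<le> wt {d} C" by (rule wt_nonneg)
    have f: "finite C" and ne: "C \<noteq> {}" using class_props[OF w Fs C] by auto
    hence "card C \<ge> 1" by (simp add: Suc_leI card_gt_0_iff)
    thus "wt {d} C \<le> wt {} C" unfolding wt_def by auto
  qed
qed

lemma lap_Q: "int (lap_coeff G s) = Q G {} s"
  unfolding lap_coeff_def gamma_def Q_def wt_def by simp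

lemma nonneg_qpoly: "wf_graph G \<Longrightarrow> nonneg (qpoly G X)"
  unfolding nonneg_def by (simp add: coeff_qpoly Q_nonneg)

lemma nonneg_qdiff: "wf_graph G \<Longrightarrow> nonneg (qpoly G {} - qpoly G {d})"
  unfolding nonneg_def by (simp add: coeff_qpoly Q_mono)

lemma path_graph:
  assumes "is_path_with_end A a"
  obtains vs where "distinct vs" "vs \<noteq> []" "hd vs = a" "A = (set vs, pedges vs)"
proof -
  obtain vs where vs: "vs \<noteq> []" "distinct vs" "hd vs = a" "verts A = set vs"
    "edges A = {{vs ! i, vs ! Suc i} | i. Suc i < length vs}"
    using assms unfolding is_path_with_end_def by blast
  have "A = (verts A, edges A)" unfolding verts_def edges_def by simp
  hence "A = (set vs, pedges vs)" using vs unfolding pedges_def by simp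
  thus ?thesis using that vs by blast
qed

lemma path_qpoly:
  assumes "is_path_with_end A a"
  shows "qpoly A {} = pn (card (verts A) - 1)" "qpoly A {a} = pm (card (verts A) - 1)"
    "a \<in> verts A" "wf_graph A"
proof -
  obtain vs where vs: "distinct vs" "vs \<noteq> []" "hd vs = a" "A = (set vs, pedges vs)"
    using path_graph[OF assms] by blast
  have c: "card (verts A) = length vs" using vs by (simp add: distinct_card)
  show "qpoly A {} = pn (card (verts A) - 1)" "qpoly A {a} = pm (card (verts A) - 1)"
    using path_poly[OF vs(1,2)] vs(3,4) c by simp_all
  show "a \<in> verts A" using vs by (cases vs) auto
  show "wf_graph A" using vs wf_path by simp
qed



theorem mainTheorem6:
  fixes A B D H :: "'a graph" and a b d x y :: 'a and \<eta> :: "'a \<Rightarrow> 'a"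
  assumes "wf_graph A" "wf_graph B" "wf_graph D" "wf_graph H"
    and "verts A \<inter> verts B = {}" "verts A \<inter> verts D = {}" "verts A \<inter> verts H = {}"
    and "verts B \<inter> verts D = {}" "verts B \<inter> verts H = {}" "verts D \<inter> verts H = {}"
    and "is_path_with_end A a" and "is_path_with_end B b"
    and "d \<in> verts D" and "\<exists>e\<in>edges D. d \<in> e"
    and "x \<in> verts H" "y \<in> verts H" "x \<noteq> y"
    and "is_automorphism H \<eta>" "\<eta> x = y" "\<eta> y = x"
    and "card (verts A) \<le> card (verts B)"
  shows "let R = identify (identify (graph_union (graph_union A B) H) a x) b y;
             Ga = identify (graph_union R D) a d;
             Gb = identify (graph_union R D) b d
         in \<forall>s::nat. lap_coeff Ga s \<ge> lap_coeff Gb s"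
proof -
  note wA = assms(1) and wB = assms(2) and wD = assms(3) and wH = assms(4)
  note pA = path_qpoly[OF assms(11)] and pB = path_qpoly[OF assms(12)]
  have aA: "a \<in> verts A" and bB: "b \<in> verts B" using pA(3) pB(3) .
  have dD: "d \<in> verts D" and xH: "x \<in> verts H" and yH: "y \<in> verts H" using assms(13,15,16) .
  have aH: "a \<notin> verts H" using aA assms(7) by blast
  have bH: "b \<notin> verts H" using bB assms(9) by blast
  have aB: "a \<notin> verts B" using aA assms(5) by blast
  have bA: "b \<notin> verts A" using bB assms(5) by blast
  have aD: "a \<notin> verts D" using aA assms(6) by blast
  have bD: "b \<notin> verts D" using bB assms(8) by blast
  have dH: "d \<notin> verts H" using dD assms(10) by blast
  have dA: "d \<notin> verts A" using dD assms(6) by blast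
  have dB: "d \<notin> verts B" using dD assms(8) by blast
  have xA: "x \<notin> verts A" using xH assms(7) by blast
  have xB: "x \<notin> verts B" using xH assms(9) by blast
  have yA: "y \<notin> verts A" using yH assms(7) by blast
  have yB: "y \<notin> verts B" using yH assms(9) by blast
  have ab: "a \<noteq> b" using aA bA by blast
  have ay: "a \<noteq> y" using aH yH by blast
  have xy: "x \<noteq> y" using assms(17) .
  define f1 where "f1 = (\<lambda>z. if z = x then a else z)"
  define f2 where "f2 = (\<lambda>z. if z = y then b else z)"
  define g where "g = f2 \<circ> f1"
  define H' where "H' = rename g H"
  define fa where "fa = (\<lambda>z. if z = d then a else z)"
  define fb where "fb = (\<lambda>z. if z = d then b else z)"
  define Da where "Da = rename fa D"
  define Db where "Db = rename fb D"
  define K where "K = graph_union H' A"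
  define R' where "R' = graph_union K B"
  have gx: "g x = a" unfolding g_def f1_def f2_def using ay by simp
  have gy: "g y = b" unfolding g_def f1_def f2_def using xy by simp
  have go: "g h = h" if "h \<noteq> x" "h \<noteq> y" for h unfolding g_def f1_def f2_def using that by simp
  have inj1: "inj_on f1 (verts H)" unfolding f1_def using inj_if[OF aH] .
  have f1V: "f1 ` verts H \<subseteq> insert a (verts H)" unfolding f1_def by auto
  have bf1: "b \<notin> f1 ` verts H" using f1V bH ab by blast
  have inj2: "inj_on f2 (f1 ` verts H)" unfolding f2_def using inj_if[OF bf1] .
  have injg: "inj_on g (verts H)" unfolding g_def using comp_inj_on[OF inj1 inj2] .
  have wH': "wf_graph H'" unfolding H'_def using wf_rename[OF wH injg] .
  have VH': "verts H' = g ` verts H" unfolding H'_def by simp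
  have VH'sub: "verts H' \<subseteq> (verts H - {x, y}) \<union> {a, b}"
  proof
    fix z assume "z \<in> verts H'"
    then obtain h where h: "h \<in> verts H" "z = g h" using VH' by blast
    show "z \<in> (verts H - {x, y}) \<union> {a, b}"
      using h gx gy go[of h] by (cases "h = x"; cases "h = y") auto
  qed
  have aH': "a \<in> verts H'" using VH' gx xH by blast
  have bH': "b \<in> verts H'" using VH' gy yH by blast
  have injfa: "inj_on fa (verts D)" unfolding fa_def using inj_if[OF aD] .
  have injfb: "inj_on fb (verts D)" unfolding fb_def using inj_if[OF bD] .
  have wDa: "wf_graph Da" unfolding Da_def using wf_rename[OF wD injfa] .
  have wDb: "wf_graph Db" unfolding Db_def using wf_rename[OF wD injfb] .
  have wK: "wf_graph K" unfolding K_def using wf_union[OF wH' wA] .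
  have wR: "wf_graph R'" unfolding R'_def using wf_union[OF wK wB] .
  have VK: "verts K = verts H' \<union> verts A" unfolding K_def by simp
  have VR: "verts R' = verts H' \<union> verts A \<union> verts B" unfolding R'_def K_def by simp
  have IK: "verts H' \<inter> verts A = {a}"
  proof
    show "verts H' \<inter> verts A \<subseteq> {a}" using VH'sub bA assms(7) by blast
    show "{a} \<subseteq> verts H' \<inter> verts A" using aH' aA by blast
  qed
  have IR: "verts K \<inter> verts B = {b}"
  proof
    show "verts K \<inter> verts B \<subseteq> {b}" unfolding VK using VH'sub aB assms(9) assms(5) by blast
    show "{b} \<subseteq> verts K \<inter> verts B" unfolding VK using bH' bB by blast
  qed
  have VDa: "verts Da \<subseteq> insert a (verts D - {d})" and aDa: "a \<in> verts Da"
    unfolding Da_def fa_def using dD by auto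
  have VDb: "verts Db \<subseteq> insert b (verts D - {d})" and bDb: "b \<in> verts Db"
    unfolding Db_def fb_def using dD by auto
  have RD: "verts R' \<inter> verts D = {}"
    unfolding VR using VH'sub aD bD assms(6) assms(8) assms(10) by blast
  have IGa: "verts R' \<inter> verts Da = {a}"
  proof
    show "verts R' \<inter> verts Da \<subseteq> {a}" using VDa RD by blast
    show "{a} \<subseteq> verts R' \<inter> verts Da" using aDa aA VR by blast
  qed
  have IGb: "verts R' \<inter> verts Db = {b}"
  proof
    show "verts R' \<inter> verts Db \<subseteq> {b}" using VDb RD by blast
    show "{b} \<subseteq> verts R' \<inter> verts Db" using bDb bB VR by blast
  qed
  have dR: "d \<notin> verts R'" using RD dD by blast
  have Req: "identify (identify (graph_union (graph_union A B) H) a x) b y = R'"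
  proof -
    have xAB: "x \<notin> verts (graph_union A B)" using xA xB by simp
    have yAB: "y \<notin> verts (graph_union A B)" using yA yB by simp
    have "identify (graph_union (graph_union A B) H) a x = graph_union (graph_union A B) (rename f1 H)"
      unfolding f1_def by (rule identify_union[OF wf_union[OF wA wB] xAB])
    hence "identify (identify (graph_union (graph_union A B) H) a x) b y
        = graph_union (graph_union A B) (rename f2 (rename f1 H))"
      unfolding f2_def using identify_union[OF wf_union[OF wA wB] yAB] by simp
    also have "\<dots> = graph_union (graph_union A B) H'"
      unfolding H'_def g_def rename_comp ..
    also have "\<dots> = R'"
      unfolding R'_def K_def graph_union_def verts_def edges_def by (simp add: Un_ac)
    finally show ?thesis .
  qed
  have Gaeq: "identify (graph_union R' D) a d = graph_union R' Da"
    unfolding Da_def fa_def by (rule identify_union[OF wR dR])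
  have Gbeq: "identify (graph_union R' D) b d = graph_union R' Db"
    unfolding Db_def fb_def by (rule identify_union[OF wR dR])
  have PGa: "qpoly (graph_union R' Da) {} = qpoly R' {} * qpoly Da {a} + qpoly R' {a} * qpoly Da {}
              - qpoly R' {a} * qpoly Da {a}"
    using qpoly_glue[OF wR wDa IGa, of "{}"] by simp
  have PGb: "qpoly (graph_union R' Db) {} = qpoly R' {} * qpoly Db {b} + qpoly R' {b} * qpoly Db {}
              - qpoly R' {b} * qpoly Db {b}"
    using qpoly_glue[OF wR wDb IGb, of "{}"] by simp
  have Da1: "qpoly Da {a} = qpoly D {d}" and Da0: "qpoly Da {} = qpoly D {}"
    using qpoly_rename[OF wD injfa, of "{d}"] qpoly_rename[OF wD injfa, of "{}"] dD
    unfolding Da_def fa_def by simp_all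
  have Db1: "qpoly Db {b} = qpoly D {d}" and Db0: "qpoly Db {} = qpoly D {}"
    using qpoly_rename[OF wD injfb, of "{d}"] qpoly_rename[OF wD injfb, of "{}"] dD
    unfolding Db_def fb_def by simp_all
  have ba: "{b, a} = {a, b}" by (simp add: insert_commute)
  have RA: "qpoly R' {a} = qpoly K {a} * qpoly B {b} + qpoly K {a, b} * qpoly B {}
              - qpoly K {a, b} * qpoly B {b}"
  proof -
    have "b \<notin> {a}" using ab by simp
    moreover have "{a} \<inter> verts K = {a}" using aA VK by blast
    moreover have "{a} \<inter> verts B = {}" using aB by blast
    ultimately show ?thesis unfolding R'_def using qpoly_glue[OF wK wB IR, of "{a}"] ba by simp
  qed
  have RB: "qpoly R' {b} = qpoly K {b} * qpoly B {b}"
  proof -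
    have "{b} \<inter> verts K = {b}" using bH' VK by blast
    moreover have "{b} \<inter> verts B = {b}" using bB by blast
    ultimately show ?thesis unfolding R'_def using qpoly_glue_in[OF wK wB IR, of "{b}"] by simp
  qed
  have KA: "qpoly K {a} = qpoly H' {a} * qpoly A {a}"
  proof -
    have "{a} \<inter> verts H' = {a}" using aH' by blast
    moreover have "{a} \<inter> verts A = {a}" using aA by blast
    ultimately show ?thesis unfolding K_def using qpoly_glue_in[OF wH' wA IK, of "{a}"] by simp
  qed
  have KAB: "qpoly K {a, b} = qpoly H' {a, b} * qpoly A {a}"
  proof -
    have "{a, b} \<inter> verts H' = {a, b}" using aH' bH' by blast
    moreover have "{a, b} \<inter> verts A = {a}" using aA bA by blast
    ultimately show ?thesis unfolding K_def using qpoly_glue_in[OF wH' wA IK, of "{a, b}"] by simp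
  qed
  have KB: "qpoly K {b} = qpoly H' {b} * qpoly A {a} + qpoly H' {a, b} * qpoly A {}
              - qpoly H' {a, b} * qpoly A {a}"
  proof -
    have "a \<notin> {b}" using ab by simp
    moreover have "{b} \<inter> verts H' = {b}" using bH' by blast
    moreover have "{b} \<inter> verts A = {}" using bA by blast
    ultimately show ?thesis unfolding K_def using qpoly_glue[OF wH' wA IK, of "{b}"] by simp
  qed
  have Ha: "qpoly H' {a} = qpoly H {x}"
    using qpoly_rename[OF wH injg, of "{x}"] xH gx unfolding H'_def by simp
  have Hb: "qpoly H' {b} = qpoly H {y}"
    using qpoly_rename[OF wH injg, of "{y}"] yH gy unfolding H'_def by simp
  have Hab: "qpoly H' {a, b} = qpoly H {x, y}"
    using qpoly_rename[OF wH injg, of "{x, y}"] xH yH gx gy unfolding H'_def by simp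
  have Hyx: "qpoly H {y} = qpoly H {x}"
  proof -
    have injeta: "inj_on \<eta> (verts H)" using assms(18) unfolding is_automorphism_def bij_betw_def by blast
    have "qpoly (rename \<eta> H) (\<eta> ` {x}) = qpoly H {x}" using qpoly_rename[OF wH injeta, of "{x}"] xH by simp
    thus ?thesis using auto_rename[OF wH assms(18)] assms(19) by simp
  qed
  define p where "p = card (verts A) - 1"
  define q where "q = card (verts B) - 1"
  have pq: "p \<le> q" unfolding p_def q_def using assms(21) by simp
  define h where "h = qpoly H {x}"
  define k where "k = qpoly H {x, y}"
  define dd where "dd = qpoly D {} - qpoly D {d}"
  have diff: "qpoly (graph_union R' Da) {} - qpoly (graph_union R' Db) {} = k * W p q * dd"
  proof -
    have "qpoly (graph_union R' Da) {} - qpoly (graph_union R' Db) {} =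
          (qpoly R' {a} - qpoly R' {b}) * (qpoly D {} - qpoly D {d})"
      unfolding PGa PGb Da1 Da0 Db1 Db0 by algebra
    also have "qpoly R' {a} - qpoly R' {b} = k * W p q"
    proof -
      have "qpoly R' {a} - qpoly R' {b} =
        h * pm p * pm q + k * pm p * pn q - k * pm p * pm q - (h * pm p + k * pn p - k * pm p) * pm q"
        unfolding RA RB KA KAB KB Ha Hb Hab Hyx h_def k_def p_def q_def pA(1) pA(2) pB(1) pB(2) by simp
      also have "\<dots> = k * W p q" unfolding W_def by algebra
      finally show ?thesis .
    qed
    finally show ?thesis unfolding dd_def .
  qed
  have nn: "nonneg (k * W p q * dd)"
    unfolding k_def dd_def
    by (intro nonneg_mult nonneg_qpoly[OF wH] W_nonneg[OF pq] nonneg_qdiff[OF wD])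
  have wGa: "wf_graph (graph_union R' Da)" using wf_union[OF wR wDa] .
  have wGb: "wf_graph (graph_union R' Db)" using wf_union[OF wR wDb] .
  have main: "lap_coeff (graph_union R' Db) s \<le> lap_coeff (graph_union R' Da) s" for s
  proof -
    have "coeff (k * W p q * dd) s \<ge> 0" using nn unfolding nonneg_def by blast
    hence "coeff (qpoly (graph_union R' Da) {}) s - coeff (qpoly (graph_union R' Db) {}) s \<ge> 0"
      using diff by (metis coeff_diff)
    hence "Q (graph_union R' Db) {} s \<le> Q (graph_union R' Da) {} s"
      unfolding coeff_qpoly[OF wGa] coeff_qpoly[OF wGb] by simp
    hence "int (lap_coeff (graph_union R' Db) s) \<le> int (lap_coeff (graph_union R' Da) s)"
      unfolding lap_Q .
    thus ?thesis by simp
  qed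
  show ?thesis unfolding Let_def Req Gaeq Gbeq using main by blast
qed

end
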